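(* For every skew shape $\lambda/\mu$ and every $k$, there is a double weight preserving bijection from the set of primed tableaux of shape $\lambda/\mu$ over $X'_k$ to the set of signed tableaux of shape $\lambda/\mu$ over $\bar X_k$.
   Context: A primed tableau of shape $\lambda/\mu$ over $X'_k=\{1'<1<2'<2<\dots<k'<k\}$ is a filling of the skew diagram with rows and columns weakly increasing, at most one $i'$ in each row and at most one $i$ in each column for every $i$; its double weight is $(X,Y)$ where $X(i)$ is the number of entries $i'$ and $Y(i)$ the number of entries $i$. A signed tableau of shape $\lambda/\mu$ over $\bar X_k=\{\bar k<\dots<\bar1<1<\dots<k\}$ is a filling with rows and columns weakly increasing, at most one $\bar i$ in each row and at most one $i$ in each column for every $i$; its double weight is $(X,Y)$ where $X(i)$ is the number of entries $\bar i$ and $Y(i)$ the number of entries $i$. *)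

theory Defs
  imports Main
begin

text \<open>Partitions are weakly decreasing lists of naturals; parts beyond the
length are 0.\<close>

definition is_partition :: "nat list \<Rightarrow> bool" where
  "is_partition lam \<longleftrightarrow> sorted (rev lam)"

definition part :: "nat list \<Rightarrow> nat \<Rightarrow> nat" where
  "part lam i = (if i < length lam then lam ! i else 0)"

definition skew_shape :: "nat list \<Rightarrow> nat list \<Rightarrow> bool" where
  "skew_shape lam mu \<longleftrightarrow> is_partition lam \<and> is_partition mu \<and>
     (\<forall>i. part mu i \<le> part lam i)"

text \<open>Cells (row, column), 0-indexed, in English convention.\<close>
definition cells :: "nat list \<Rightarrow> nat list \<Rightarrow> (nat \<times> nat) set" where
  "cells lam mu = {(i, j). part mu i \<le> j \<and> j < part lam i}"

text \<open>A letter is a pair (i, marked).  In the primed alphabet (i, True) is i'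
and (i, False) is i; in the signed alphabet (i, True) is bar i and (i, False) is i.
Both alphabets consist of the letters with 1 \<le> i \<le> k; they differ in their order.\<close>
type_synonym letter = "nat \<times> bool"

definition in_alphabet :: "nat \<Rightarrow> letter \<Rightarrow> bool" where
  "in_alphabet k a \<longleftrightarrow> 1 \<le> fst a \<and> fst a \<le> k"

text \<open>Order on X'_k = 1' < 1 < 2' < 2 < ... : i' has rank 2i-1, i has rank 2i.\<close>
definition rank_primed :: "letter \<Rightarrow> int" where
  "rank_primed a = 2 * int (fst a) - (if snd a then 1 else 0)"

text \<open>Order on bar X_k = bar k < ... < bar 1 < 1 < ... < k : bar i has rank -i, i has rank i.\<close>
definition rank_signed :: "letter \<Rightarrow> int" where
  "rank_signed a = (if snd a then - int (fst a) else int (fst a))"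

type_synonym filling = "nat \<times> nat \<Rightarrow> letter option"

definition tableau_wrt :: "(letter \<Rightarrow> int) \<Rightarrow> nat list \<Rightarrow> nat list \<Rightarrow> nat \<Rightarrow> filling \<Rightarrow> bool" where
  "tableau_wrt rk lam mu k T \<longleftrightarrow>
     (\<forall>c. (T c \<noteq> None) \<longleftrightarrow> c \<in> cells lam mu) \<and>
     (\<forall>c a. T c = Some a \<longrightarrow> in_alphabet k a) \<and>
     (\<forall>i j j' a b. T (i, j) = Some a \<and> T (i, j') = Some b \<and> j \<le> j' \<longrightarrow> rk a \<le> rk b) \<and>
     (\<forall>i i' j a b. T (i, j) = Some a \<and> T (i', j) = Some b \<and> i \<le> i' \<longrightarrow> rk a \<le> rk b) \<and>
     (\<forall>r v. card {j. T (r, j) = Some (v, True)} \<le> 1) \<and>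
     (\<forall>col v. card {i. T (i, col) = Some (v, False)} \<le> 1)"

definition primed_tableaux :: "nat list \<Rightarrow> nat list \<Rightarrow> nat \<Rightarrow> filling set" where
  "primed_tableaux lam mu k = {T. tableau_wrt rank_primed lam mu k T}"

definition signed_tableaux :: "nat list \<Rightarrow> nat list \<Rightarrow> nat \<Rightarrow> filling set" where
  "signed_tableaux lam mu k = {T. tableau_wrt rank_signed lam mu k T}"

definition double_weight :: "filling \<Rightarrow> (nat \<Rightarrow> nat) \<times> (nat \<Rightarrow> nat)" where
  "double_weight T = ((\<lambda>i. card {c. T c = Some (i, True)}),
                      (\<lambda>i. card {c. T c = Some (i, False)}))"

end

theory Submission
  imports Defs
begin


lemma levels_bij:
  assumes "finite X" "finite Y" "\<And>p. card {x\<in>X. \<phi> x = p} = card {y\<in>Y. \<psi> y = p}"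
  shows "\<exists>g. bij_betw g X Y \<and> (\<forall>x\<in>X. \<psi> (g x) = \<phi> x)"
proof -
  have "\<forall>p. \<exists>h. bij_betw h {x\<in>X. \<phi> x = p} {y\<in>Y. \<psi> y = p}"
  proof
    fix p show "\<exists>h. bij_betw h {x\<in>X. \<phi> x = p} {y\<in>Y. \<psi> y = p}"
      by (rule finite_same_card_bij) (use assms in auto)
  qed
  then obtain h where h: "\<And>p. bij_betw (h p) {x\<in>X. \<phi> x = p} {y\<in>Y. \<psi> y = p}" by metis
  define g where "g x = h (\<phi> x) x" for x
  have 1: "g x \<in> Y \<and> \<psi> (g x) = \<phi> x" if x: "x \<in> X" for x
  proof -
    have "x \<in> {x'\<in>X. \<phi> x' = \<phi> x}" using x by simp
    then have "h (\<phi> x) x \<in> {y\<in>Y. \<psi> y = \<phi> x}" by (rule bij_betw_apply[OF h])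
    then show ?thesis unfolding g_def by simp
  qed
  have "inj_on g X"
  proof (rule inj_onI)
    fix x y assume xy: "x\<in>X" "y\<in>X" "g x = g y"
    then have e: "\<phi> x = \<phi> y" using 1 by metis
    have "inj_on (h (\<phi> x)) {x'\<in>X. \<phi> x' = \<phi> x}" using h[of "\<phi> x"] unfolding bij_betw_def by simp
    moreover have "h (\<phi> x) x = h (\<phi> x) y" using xy e unfolding g_def by simp
    ultimately show "x = y" using xy e by (simp add: inj_on_def)
  qed
  moreover have "g ` X = Y"
  proof
    show "g ` X \<subseteq> Y" using 1 by blast
    show "Y \<subseteq> g ` X"
    proof
      fix y assume "y\<in>Y"
      then have "y \<in> h (\<psi> y) ` {x\<in>X. \<phi> x = \<psi> y}" using h[of "\<psi> y"] unfolding bij_betw_def by simp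
      then obtain x where x: "x \<in> X" "\<phi> x = \<psi> y" "y = h (\<psi> y) x" by auto
      then have "y = g x" unfolding g_def by simp
      then show "y \<in> g ` X" using x(1) by simp
    qed
  qed
  ultimately have "bij_betw g X Y" unfolding bij_betw_def by blast
  then show ?thesis using 1 by blast
qed

definition dec :: "(nat \<Rightarrow> nat) \<Rightarrow> bool" where "dec A \<longleftrightarrow> (\<forall>i. A (Suc i) \<le> A i)"
definition strip :: "bool \<Rightarrow> (nat\<Rightarrow>nat) \<Rightarrow> (nat\<Rightarrow>nat) \<Rightarrow> bool" where
  "strip mk A B \<longleftrightarrow> (\<forall>i. A i \<le> B i) \<and> (if mk then (\<forall>i. B i \<le> Suc (A i)) else (\<forall>i. B (Suc i) \<le> A i))"
definition Mid :: "bool \<Rightarrow> bool \<Rightarrow> (nat\<Rightarrow>nat) \<Rightarrow> (nat\<Rightarrow>nat) \<Rightarrow> (nat\<Rightarrow>nat) set" where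
  "Mid mk1 mk2 A B = {m. dec m \<and> strip mk1 A m \<and> strip mk2 m B}"
definition sz :: "nat \<Rightarrow> (nat\<Rightarrow>nat) \<Rightarrow> nat" where "sz N A = (\<Sum>i<N. A i)"
lemma dummy: True by simp

definition box :: "(nat\<Rightarrow>nat) \<Rightarrow> (nat\<Rightarrow>nat) \<Rightarrow> (nat\<Rightarrow>nat) set" where
  "box lo hi = {m. \<forall>i. lo i \<le> m i \<and> m i \<le> hi i}"

lemma box_iff: "m \<in> box lo hi \<longleftrightarrow> (\<forall>i. lo i \<le> m i \<and> m i \<le> hi i)"
  unfolding box_def by simp

lemma sz_mono: "(\<And>i. A i \<le> B i) \<Longrightarrow> sz N A \<le> sz N B"
  unfolding sz_def by (rule sum_mono) auto

lemma box_count: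
  assumes le: "\<And>i. lo i \<le> hi i" and w: "\<And>i. hi i \<le> Suc (lo i)" and z: "\<And>i. N \<le> i \<Longrightarrow> hi i = 0"
  shows "card {m \<in> box lo hi. int (sz N m) = s} =
     (if int (sz N lo) \<le> s then card {i. i<N \<and> hi i \<noteq> lo i} choose nat (s - int (sz N lo)) else 0)"
    and "finite (box lo hi)"
    and "sz N hi = sz N lo + card {i. i<N \<and> hi i \<noteq> lo i}"
proof -
  define Fr where "Fr = {i. i<N \<and> hi i \<noteq> lo i}"
  define e where "e X = (\<lambda>i. lo i + (if i \<in> X then 1 else 0))" for X :: "nat set"
  have finFr: "finite Fr" unfolding Fr_def by auto
  have boxeq: "box lo hi = e ` Pow Fr"
  proof
    show "box lo hi \<subseteq> e ` Pow Fr"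
    proof
      fix m assume m: "m \<in> box lo hi"
      have "m = e {i. i<N \<and> m i \<noteq> lo i}"
      proof
        fix i
        have "lo i \<le> m i \<and> m i \<le> hi i" using m unfolding box_def by blast
        then show "m i = e {i. i<N \<and> m i \<noteq> lo i} i"
          using le[of i] w[of i] z[of i] unfolding e_def by (cases "N \<le> i") auto
      qed
      moreover have "{i. i<N \<and> m i \<noteq> lo i} \<subseteq> Fr"
      proof
        fix i assume "i \<in> {i. i<N \<and> m i \<noteq> lo i}"
        moreover have "lo i \<le> m i \<and> m i \<le> hi i" using m unfolding box_def by blast
        ultimately show "i \<in> Fr" unfolding Fr_def by auto
      qed
      ultimately show "m \<in> e ` Pow Fr" by blast
    qed
    show "e ` Pow Fr \<subseteq> box lo hi"
    proof
      fix m assume "m \<in> e ` Pow Fr"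
      then obtain X where "X \<subseteq> Fr" "m = e X" by auto
      then show "m \<in> box lo hi" unfolding box_iff
      proof (intro allI)
        fix i
        show "lo i \<le> m i \<and> m i \<le> hi i"
        proof (cases "i \<in> X")
          case True
          then have "hi i \<noteq> lo i" using \<open>X \<subseteq> Fr\<close> unfolding Fr_def by auto
          then show ?thesis using True \<open>m = e X\<close> le[of i] w[of i] unfolding e_def by auto
        next
          case False
          then show ?thesis using \<open>m = e X\<close> le[of i] unfolding e_def by auto
        qed
      qed
    qed
  qed
  have inje: "inj_on e (Pow Fr)"
  proof (rule inj_onI)
    fix X Y assume "X \<in> Pow Fr" "Y \<in> Pow Fr" "e X = e Y"
    show "X = Y"
    proof (rule set_eqI)
      fix i have "e X i = e Y i" using \<open>e X = e Y\<close> by simp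
      then show "i \<in> X \<longleftrightarrow> i \<in> Y" unfolding e_def by (auto split: if_splits)
    qed
  qed
  have sze: "sz N (e X) = sz N lo + card X" if "X \<subseteq> Fr" for X
  proof -
    have X: "X \<subseteq> {..<N}" using that unfolding Fr_def by auto
    have "sz N (e X) = sz N lo + (\<Sum>i<N. if i \<in> X then 1 else 0)"
      unfolding sz_def e_def by (simp add: sum.distrib)
    also have "(\<Sum>i<N. if i \<in> X then 1 else (0::nat)) = card X"
      using X by (simp add: sum.If_cases Int_absorb1)
    finally show ?thesis .
  qed
  show "finite (box lo hi)" using boxeq finFr by simp
  have "hi = e Fr"
  proof
    fix i show "hi i = e Fr i" using le[of i] w[of i] z[of i] unfolding e_def Fr_def
      by (cases "N \<le> i") auto
  qed
  then show "sz N hi = sz N lo + card {i. i<N \<and> hi i \<noteq> lo i}"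
    using sze[of Fr] unfolding Fr_def by simp
  have "{m \<in> box lo hi. int (sz N m) = s} = e ` {X. X \<subseteq> Fr \<and> int (sz N lo) + int (card X) = s}"
    unfolding boxeq using sze by auto
  moreover have "inj_on e {X. X \<subseteq> Fr \<and> int (sz N lo) + int (card X) = s}"
    using inje by (rule inj_on_subset) auto
  ultimately have "card {m \<in> box lo hi. int (sz N m) = s} = card {X. X \<subseteq> Fr \<and> int (sz N lo) + int (card X) = s}"
    by (simp add: card_image)
  also have "\<dots> = (if int (sz N lo) \<le> s then card Fr choose nat (s - int (sz N lo)) else 0)"
  proof (cases "int (sz N lo) \<le> s")
    case True
    then have "{X. X \<subseteq> Fr \<and> int (sz N lo) + int (card X) = s} = {X. X \<subseteq> Fr \<and> card X = nat (s - int (sz N lo))}"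
      by auto
    then show ?thesis using True n_subsets[OF finFr] by simp
  next
    case False
    then have "{X. X \<subseteq> Fr \<and> int (sz N lo) + int (card X) = s} = {}" by auto
    then show ?thesis using False by simp
  qed
  finally show "card {m \<in> box lo hi. int (sz N m) = s} =
     (if int (sz N lo) \<le> s then card {i. i<N \<and> hi i \<noteq> lo i} choose nat (s - int (sz N lo)) else 0)"
    unfolding Fr_def .
qed



definition hi1 :: "(nat\<Rightarrow>nat) \<Rightarrow> (nat\<Rightarrow>nat) \<Rightarrow> nat \<Rightarrow> nat" where
  "hi1 A B i = (case i of 0 \<Rightarrow> B 0 | Suc j \<Rightarrow> min (A j) (B i))"
definition lo1 :: "(nat\<Rightarrow>nat) \<Rightarrow> (nat\<Rightarrow>nat) \<Rightarrow> nat \<Rightarrow> nat" where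
  "lo1 A B i = max (A i) (B i - 1)"
definition lo2 :: "(nat\<Rightarrow>nat) \<Rightarrow> (nat\<Rightarrow>nat) \<Rightarrow> nat \<Rightarrow> nat" where
  "lo2 A B i = max (A i) (B (Suc i))"
definition hi2 :: "(nat\<Rightarrow>nat) \<Rightarrow> (nat\<Rightarrow>nat) \<Rightarrow> nat \<Rightarrow> nat" where
  "hi2 A B i = min (Suc (A i)) (B i)"


lemma hi1_Suc: "hi1 A B (Suc j) = min (A j) (B (Suc j))" unfolding hi1_def by simp
lemma hi1_0: "hi1 A B 0 = B 0" unfolding hi1_def by simp

lemma Mid_FT: "Mid False True A B = box (lo1 A B) (hi1 A B)"
proof (intro set_eqI iffI)
  fix m assume "m \<in> Mid False True A B"
  then have d: "\<And>i. m (Suc i) \<le> m i" and s: "\<And>i. A i \<le> m i" "\<And>i. m (Suc i) \<le> A i"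
     "\<And>i. m i \<le> B i" "\<And>i. B i \<le> Suc (m i)"
    unfolding Mid_def dec_def strip_def by auto
  show "m \<in> box (lo1 A B) (hi1 A B)" unfolding box_iff
  proof
    fix i
    have "B i - 1 \<le> m i" using s(4)[of i] by arith
    then show "lo1 A B i \<le> m i \<and> m i \<le> hi1 A B i"
      using s[of i] by (cases i) (auto simp: lo1_def hi1_def s)
  qed
next
  fix m assume "m \<in> box (lo1 A B) (hi1 A B)"
  then have b: "\<And>i. lo1 A B i \<le> m i \<and> m i \<le> hi1 A B i" unfolding box_iff by blast
  have s: "A i \<le> m i" "m (Suc i) \<le> A i" "m i \<le> B i" "B i \<le> Suc (m i)" for i
    using b[of i] b[of "Suc i"] by (cases i; auto simp: lo1_def hi1_def)+
  show "m \<in> Mid False True A B" unfolding Mid_def dec_def strip_def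
    using s le_trans by (auto intro: le_trans)
qed

lemma Mid_TF: "Mid True False A B = box (lo2 A B) (hi2 A B)"
proof (intro set_eqI iffI)
  fix m assume "m \<in> Mid True False A B"
  then have s: "\<And>i. A i \<le> m i" "\<And>i. m i \<le> Suc (A i)"
     "\<And>i. m i \<le> B i" "\<And>i. B (Suc i) \<le> m i"
    unfolding Mid_def dec_def strip_def by auto
  show "m \<in> box (lo2 A B) (hi2 A B)" unfolding box_iff
    using s by (auto simp: lo2_def hi2_def)
next
  fix m assume "m \<in> box (lo2 A B) (hi2 A B)"
  then have b: "\<And>i. lo2 A B i \<le> m i \<and> m i \<le> hi2 A B i" unfolding box_iff by blast
  have s: "A i \<le> m i" "m i \<le> Suc (A i)" "m i \<le> B i" "B (Suc i) \<le> m i" for i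
    using b[of i] by (auto simp: lo2_def hi2_def)
  have d: "m (Suc i) \<le> m i" for i using s(3)[of "Suc i"] s(4)[of i] by simp
  show "m \<in> Mid True False A B" unfolding Mid_def dec_def strip_def
    using s d by auto
qed

lemma Mid_FF: "Mid False False A B = box (lo2 A B) (hi1 A B)"
proof (intro set_eqI iffI)
  fix m assume "m \<in> Mid False False A B"
  then have s: "\<And>i. A i \<le> m i" "\<And>i. m (Suc i) \<le> A i"
     "\<And>i. m i \<le> B i" "\<And>i. B (Suc i) \<le> m i"
    unfolding Mid_def dec_def strip_def by auto
  show "m \<in> box (lo2 A B) (hi1 A B)" unfolding box_iff
  proof
    fix i show "lo2 A B i \<le> m i \<and> m i \<le> hi1 A B i"
      using s[of i] by (cases i) (auto simp: lo2_def hi1_def s)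
  qed
next
  fix m assume "m \<in> box (lo2 A B) (hi1 A B)"
  then have b: "\<And>i. lo2 A B i \<le> m i \<and> m i \<le> hi1 A B i" unfolding box_iff by blast
  have s: "A i \<le> m i" "m (Suc i) \<le> A i" "m i \<le> B i" "B (Suc i) \<le> m i" for i
    using b[of i] b[of "Suc i"] by (cases i; auto simp: lo2_def hi1_def)+
  show "m \<in> Mid False False A B" unfolding Mid_def dec_def strip_def
    using s by (auto intro: le_trans)
qed

lemma tele: "(\<Sum>i<n. lo2 A B i + hi1 A B i) + hi1 A B n = (\<Sum>i<n. A i) + (\<Sum>i<Suc n. B i)"
proof (induction n)
  case 0 then show ?case by (simp add: hi1_0)
next
  case (Suc n)
  have "lo2 A B n + hi1 A B (Suc n) = A n + B (Suc n)"
    unfolding lo2_def hi1_Suc by simp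
  then show ?case using Suc by simp
qed

lemma sum_lo2_hi1:
  assumes "\<And>i. N \<le> i \<Longrightarrow> B i = 0"
  shows "sz N (lo2 A B) + sz N (hi1 A B) = sz N A + sz N B"
proof -
  have "hi1 A B N = 0" using assms by (cases N) (auto simp: hi1_def)
  then show ?thesis using tele[where n=N and A=A and B=B] assms[of N] unfolding sz_def
    by (simp add: sum.distrib)
qed

lemma sum_lo1_hi2:
  assumes "\<And>i. A i \<le> B i"
  shows "sz N (lo1 A B) + sz N (hi2 A B) = sz N A + sz N B"
proof -
  have "lo1 A B i + hi2 A B i = A i + B i" for i
    using assms[of i] unfolding lo1_def hi2_def by auto
  then show ?thesis unfolding sz_def by (simp add: sum.distrib[symmetric])
qed

lemma box_sz_bounds:
  "m \<in> Mid mk1 mk2 A B \<Longrightarrow> sz N A \<le> sz N m \<and> sz N m \<le> sz N B"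
  unfolding Mid_def strip_def by (auto intro!: sz_mono)

lemma box12_sym:
  assumes dA: "dec A" and dB: "dec B" and AB: "\<And>i. A i \<le> B i" and z: "\<And>i. N \<le> i \<Longrightarrow> B i = 0"
  shows "card {m \<in> box (lo1 A B) (hi1 A B). int (sz N m) = s} =
         card {m \<in> box (lo2 A B) (hi2 A B). int (sz N m) = int (sz N A) + int (sz N B) - s}"
proof (cases "\<exists>j. Suc (A j) < B (Suc j)")
  case True
  then obtain j where j: "Suc (A j) < B (Suc j)" by blast
  have "box (lo1 A B) (hi1 A B) = {}"
  proof -
    have "hi1 A B (Suc j) < lo1 A B (Suc j)" using j unfolding hi1_Suc lo1_def by auto
    then show ?thesis
    proof (rule contrapos_pp)
      assume "box (lo1 A B) (hi1 A B) \<noteq> {}"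
      then obtain m where "m \<in> box (lo1 A B) (hi1 A B)" by blast
      then have "lo1 A B (Suc j) \<le> m (Suc j)" "m (Suc j) \<le> hi1 A B (Suc j)" unfolding box_iff by auto
      then show "\<not> hi1 A B (Suc j) < lo1 A B (Suc j)" by simp
    qed
  qed
  moreover have "box (lo2 A B) (hi2 A B) = {}"
  proof -
    have "hi2 A B j < lo2 A B j" using j unfolding hi2_def lo2_def by auto
    then show ?thesis
    proof (rule contrapos_pp)
      assume "box (lo2 A B) (hi2 A B) \<noteq> {}"
      then obtain m where "m \<in> box (lo2 A B) (hi2 A B)" by blast
      then have "lo2 A B (j) \<le> m (j)" "m (j) \<le> hi2 A B (j)" unfolding box_iff by auto
      then show "\<not> hi2 A B (j) < lo2 A B (j)" by simp
    qed
  qed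
  ultimately show ?thesis by simp
next
  case False
  have l1: "lo1 A B i \<le> hi1 A B i" for i
  proof (cases i)
    case 0 then show ?thesis using AB[of 0] by (simp add: lo1_def hi1_def)
  next
    case (Suc j)
    have "B (Suc j) \<le> Suc (A j)" using False by (simp add: not_less)
    moreover have "A (Suc j) \<le> A j" using dA unfolding dec_def by blast
    ultimately show ?thesis using AB[of "Suc j"] Suc unfolding lo1_def hi1_def by auto
  qed
  have w1: "hi1 A B i \<le> Suc (lo1 A B i)" for i
    unfolding lo1_def hi1_def by (cases i) auto
  have z1: "N \<le> i \<Longrightarrow> hi1 A B i = 0" for i using z unfolding hi1_def by (cases i) auto
  have l2: "lo2 A B i \<le> hi2 A B i" for i
    using False AB[of i] dA dB unfolding dec_def lo2_def hi2_def by (auto simp: not_less)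
  have w2: "hi2 A B i \<le> Suc (lo2 A B i)" for i
    unfolding lo2_def hi2_def by auto
  have z2: "N \<le> i \<Longrightarrow> hi2 A B i = 0" for i using z unfolding hi2_def by auto
  note c1 = box_count[of "lo1 A B" "hi1 A B" N, OF l1 w1 z1]
  note c2 = box_count[of "lo2 A B" "hi2 A B" N, OF l2 w2 z2]
  define F1 where "F1 = card {i. i<N \<and> hi1 A B i \<noteq> lo1 A B i}"
  define F2 where "F2 = card {i. i<N \<and> hi2 A B i \<noteq> lo2 A B i}"
  have e1: "sz N (lo2 A B) + sz N (hi1 A B) = sz N A + sz N B" by (rule sum_lo2_hi1[OF z])
  have e2: "sz N (lo1 A B) + sz N (hi2 A B) = sz N A + sz N B" by (rule sum_lo1_hi2[OF AB])
  have F: "F1 = F2" using e1 e2 c1(3) c2(3) unfolding F1_def F2_def by simp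
  define k where "k = s - int (sz N (lo1 A B))"
  have k2: "int (sz N A) + int (sz N B) - s - int (sz N (lo2 A B)) = int F1 - k"
    using e2 c2(3) F unfolding k_def F2_def by simp
  have "(if 0 \<le> k then F1 choose nat k else 0) = (if 0 \<le> int F1 - k then F1 choose nat (int F1 - k) else 0)"
  proof (cases "0 \<le> k \<and> k \<le> int F1")
    case True
    then have "nat (int F1 - k) = F1 - nat k" by linarith
    moreover have "nat k \<le> F1" using True by linarith
    ultimately show ?thesis using True binomial_symmetric[of "nat k" F1] by simp
  next
    case False
    then show ?thesis by (auto simp: binomial_eq_0)
  qed
  moreover have "card {m \<in> box (lo1 A B) (hi1 A B). int (sz N m) = s} = (if 0 \<le> k then F1 choose nat k else 0)"
    using c1(1)[of s] unfolding k_def F1_def by simp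
  moreover have "card {m \<in> box (lo2 A B) (hi2 A B). int (sz N m) = int (sz N A) + int (sz N B) - s}
     = (if 0 \<le> int F1 - k then F1 choose nat (int F1 - k) else 0)"
    using c2(1)[of "int (sz N A) + int (sz N B) - s"] k2 F unfolding F2_def by simp
  ultimately show ?thesis by simp
qed



lemma finite_bounded_funs:
  assumes "\<And>i. N \<le> i \<Longrightarrow> hi i = 0"
  shows "finite {m :: nat \<Rightarrow> nat. \<forall>i. m i \<le> hi i}"
proof -
  define M where "M = (\<Sum>i<N. hi i)"
  have hiM: "hi i \<le> M" if "i < N" for i
    unfolding M_def using that by (intro member_le_sum) auto
  have "{m :: nat \<Rightarrow> nat. \<forall>i. m i \<le> hi i} \<subseteq> (\<lambda>xs i. if i < N then xs ! i else 0) ` {xs. set xs \<subseteq> {..M} \<and> length xs = N}"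
  proof
    fix m :: "nat \<Rightarrow> nat" assume m: "m \<in> {m. \<forall>i. m i \<le> hi i}"
    have "m = (\<lambda>i. if i < N then map m [0..<N] ! i else 0)"
    proof
      fix i show "m i = (if i < N then map m [0..<N] ! i else 0)"
        using m assms[of i] by (auto simp: not_less dest: spec[of _ i])
    qed
    moreover have "set (map m [0..<N]) \<subseteq> {..M} \<and> length (map m [0..<N]) = N"
      using m hiM by (auto intro: le_trans)
    ultimately show "m \<in> (\<lambda>xs i. if i < N then xs ! i else 0) ` {xs. set xs \<subseteq> {..M} \<and> length xs = N}"
      by blast
  qed
  moreover have "finite {xs. set xs \<subseteq> {..M} \<and> length xs = N}"
    by (rule finite_lists_length_eq) simp
  ultimately show ?thesis by (meson finite_imageI finite_subset)
qed

lemma finite_box: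
  assumes "\<And>i. N \<le> i \<Longrightarrow> hi i = 0"
  shows "finite (box lo hi)"
  by (rule finite_subset[OF _ finite_bounded_funs[OF assms]]) (auto simp: box_def)

lemma coll_eq: "(\<And>m. m \<in> X \<Longrightarrow> P m \<longleftrightarrow> Q m) \<Longrightarrow> {m\<in>X. P m} = {m\<in>X. Q m}" by auto

lemma Mid_swap:
  assumes dA: "dec A" and dB: "dec B" and AB: "\<And>i. A i \<le> B i" and z: "\<And>i. N \<le> i \<Longrightarrow> B i = 0"
    and nm: "\<not> (mk1 \<and> mk2)"
  shows "\<exists>g. bij_betw g (Mid mk1 mk2 A B) (Mid mk2 mk1 A B) \<and>
             (\<forall>m\<in>Mid mk1 mk2 A B. sz N B - sz N (g m) = sz N m - sz N A)"
proof -
  have z1: "N \<le> i \<Longrightarrow> hi1 A B i = 0" for i using z unfolding hi1_def by (cases i) auto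
  have z2: "N \<le> i \<Longrightarrow> hi2 A B i = 0" for i using z unfolding hi2_def by auto
  have fin1: "finite (box (lo1 A B) (hi1 A B))" by (rule finite_box[OF z1])
  have fin2: "finite (box (lo2 A B) (hi2 A B))" by (rule finite_box[OF z2])
  consider "\<not> mk1" "\<not> mk2" | "\<not> mk1" "mk2" | "mk1" "\<not> mk2" using nm by blast
  then show ?thesis
  proof cases
    case 1
    define g where "g m = (\<lambda>i. lo2 A B i + hi1 A B i - m i)" for m :: "nat \<Rightarrow> nat"
    have gin: "g m \<in> box (lo2 A B) (hi1 A B)" if "m \<in> box (lo2 A B) (hi1 A B)" for m
      unfolding box_iff g_def
    proof
      fix i have "lo2 A B i \<le> m i \<and> m i \<le> hi1 A B i" using that unfolding box_iff by blast
      then show "lo2 A B i \<le> lo2 A B i + hi1 A B i - m i \<and> lo2 A B i + hi1 A B i - m i \<le> hi1 A B i" by arith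
    qed
    have gg: "g (g m) = m" if "m \<in> box (lo2 A B) (hi1 A B)" for m
    proof
      fix i show "g (g m) i = m i" using that unfolding box_iff g_def by (auto dest: spec[of _ i])
    qed
    have bij: "bij_betw g (box (lo2 A B) (hi1 A B)) (box (lo2 A B) (hi1 A B))"
      by (rule bij_betw_byWitness[where f'=g]) (use gin gg in auto)
    have szg: "sz N (g m) + sz N m = sz N A + sz N B" if "m \<in> box (lo2 A B) (hi1 A B)" for m
    proof -
      have "sz N (g m) + sz N m = sz N (lo2 A B) + sz N (hi1 A B)"
        unfolding sz_def g_def sum.distrib[symmetric]
      proof (rule sum.cong)
        fix x have "lo2 A B x \<le> m x \<and> m x \<le> hi1 A B x" using that unfolding box_iff by blast
        then show "lo2 A B x + hi1 A B x - m x + m x = lo2 A B x + hi1 A B x" by arith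
      qed simp
      then show ?thesis using sum_lo2_hi1[OF z] by simp
    qed
    show ?thesis
    proof (intro exI[of _ g] conjI)
      show "bij_betw g (Mid mk1 mk2 A B) (Mid mk2 mk1 A B)" using 1 bij by (simp add: Mid_FF)
      show "\<forall>m\<in>Mid mk1 mk2 A B. sz N B - sz N (g m) = sz N m - sz N A"
      proof
        fix m assume m: "m \<in> Mid mk1 mk2 A B"
        then have "sz N A \<le> sz N m" using box_sz_bounds by blast
        then show "sz N B - sz N (g m) = sz N m - sz N A"
          using szg[of m] m 1 by (simp add: Mid_FF)
      qed
    qed
  next
    case 2
    have lv: "card {m \<in> Mid False True A B. sz N m - sz N A = p} = card {m \<in> Mid True False A B. sz N B - sz N m = p}" for p
    proof -
      have "{m \<in> Mid False True A B. sz N m - sz N A = p} = {m \<in> Mid False True A B. int (sz N m) = int (sz N A) + int p}"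
      proof (rule coll_eq)
        fix m assume "m \<in> Mid False True A B"
        then have "sz N A \<le> sz N m" using box_sz_bounds by blast
        then show "sz N m - sz N A = p \<longleftrightarrow> int (sz N m) = int (sz N A) + int p" by linarith
      qed
      moreover have "{m \<in> Mid True False A B. sz N B - sz N m = p} = {m \<in> Mid True False A B. int (sz N m) = int (sz N A) + int (sz N B) - (int (sz N A) + int p)}"
      proof (rule coll_eq)
        fix m assume "m \<in> Mid True False A B"
        then have "sz N m \<le> sz N B" using box_sz_bounds by blast
        then show "sz N B - sz N m = p \<longleftrightarrow> int (sz N m) = int (sz N A) + int (sz N B) - (int (sz N A) + int p)" by linarith
      qed
      ultimately show ?thesis using box12_sym[OF dA dB AB z] unfolding Mid_FT Mid_TF by simp
    qed
    have f1: "finite (Mid False True A B)" using fin1 by (simp add: Mid_FT)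
    have f2: "finite (Mid True False A B)" using fin2 by (simp add: Mid_TF)
    obtain g where "bij_betw g (Mid False True A B) (Mid True False A B)"
      "\<forall>m\<in>Mid False True A B. sz N B - sz N (g m) = sz N m - sz N A"
      using levels_bij[OF f1 f2 lv] by blast
    then show ?thesis using 2 by auto
  next
    case 3
    have lv: "card {m \<in> Mid True False A B. sz N m - sz N A = p} = card {m \<in> Mid False True A B. sz N B - sz N m = p}" for p
    proof -
      have "{m \<in> Mid True False A B. sz N m - sz N A = p} = {m \<in> Mid True False A B. int (sz N m) = int (sz N A) + int (sz N B) - (int (sz N B) - int p)}"
      proof (rule coll_eq)
        fix m assume "m \<in> Mid True False A B"
        then have "sz N A \<le> sz N m" using box_sz_bounds by blast
        then show "sz N m - sz N A = p \<longleftrightarrow> int (sz N m) = int (sz N A) + int (sz N B) - (int (sz N B) - int p)" by linarith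
      qed
      moreover have "{m \<in> Mid False True A B. sz N B - sz N m = p} = {m \<in> Mid False True A B. int (sz N m) = int (sz N B) - int p}"
      proof (rule coll_eq)
        fix m assume "m \<in> Mid False True A B"
        then have "sz N m \<le> sz N B" using box_sz_bounds by blast
        then show "sz N B - sz N m = p \<longleftrightarrow> int (sz N m) = int (sz N B) - int p" by linarith
      qed
      ultimately show ?thesis using box12_sym[OF dA dB AB z, where s="int (sz N B) - int p"] unfolding Mid_FT Mid_TF by simp
    qed
    have f1: "finite (Mid False True A B)" using fin1 by (simp add: Mid_FT)
    have f2: "finite (Mid True False A B)" using fin2 by (simp add: Mid_TF)
    obtain g where "bij_betw g (Mid True False A B) (Mid False True A B)"
      "\<forall>m\<in>Mid True False A B. sz N B - sz N (g m) = sz N m - sz N A"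
      using levels_bij[OF f2 f1 lv] by blast
    then show ?thesis using 3 by auto
  qed
qed



definition pos :: "letter list \<Rightarrow> letter \<Rightarrow> nat" where
  "pos L a = (LEAST t. t < length L \<and> L ! t = a)"

lemma pos_nth: "distinct L \<Longrightarrow> t < length L \<Longrightarrow> pos L (L ! t) = t"
  unfolding pos_def by (rule Least_equality) (auto simp: nth_eq_iff_index_eq)

lemma pos_in: assumes "a \<in> set L" shows "pos L a < length L \<and> L ! pos L a = a"
proof -
  have "\<exists>t. t < length L \<and> L ! t = a" using assms by (simp add: in_set_conv_nth)
  then show ?thesis unfolding pos_def by (rule LeastI_ex)
qed

definition tabw :: "(letter \<Rightarrow> int) \<Rightarrow> (letter \<Rightarrow> bool) \<Rightarrow> (nat \<times> nat) set \<Rightarrow> filling \<Rightarrow> bool" where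
  "tabw rk P C T \<longleftrightarrow>
     (\<forall>c. (T c \<noteq> None) \<longleftrightarrow> c \<in> C) \<and>
     (\<forall>c a. T c = Some a \<longrightarrow> P a) \<and>
     (\<forall>i j j' a b. T (i, j) = Some a \<and> T (i, j') = Some b \<and> j \<le> j' \<longrightarrow> rk a \<le> rk b) \<and>
     (\<forall>i i' j a b. T (i, j) = Some a \<and> T (i', j) = Some b \<and> i \<le> i' \<longrightarrow> rk a \<le> rk b) \<and>
     (\<forall>r v. card {j. T (r, j) = Some (v, True)} \<le> 1) \<and>
     (\<forall>col v. card {i. T (i, col) = Some (v, False)} \<le> 1)"

lemma tableau_wrt_tabw: "tableau_wrt rk lam mu k T = tabw rk (in_alphabet k) (cells lam mu) T"
  unfolding tableau_wrt_def tabw_def by simp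

definition Ltab :: "letter list \<Rightarrow> (nat \<times> nat) set \<Rightarrow> filling set" where
  "Ltab L C = {T. tabw (\<lambda>a. int (pos L a)) (\<lambda>a. a \<in> set L) C T}"

definition cnt :: "filling \<Rightarrow> letter \<Rightarrow> nat" where "cnt T a = card {c. T c = Some a}"

type_synonym chainf = "nat \<Rightarrow> nat \<Rightarrow> nat"

definition chain :: "letter list \<Rightarrow> (nat\<Rightarrow>nat) \<Rightarrow> (nat\<Rightarrow>nat) \<Rightarrow> chainf \<Rightarrow> bool" where
  "chain L mu la S \<longleftrightarrow> S 0 = mu \<and> (\<forall>t\<ge>length L. S t = la) \<and> (\<forall>t. dec (S t)) \<and>
     (\<forall>t<length L. strip (snd (L!t)) (S t) (S (Suc t)))"

definition fill :: "letter list \<Rightarrow> chainf \<Rightarrow> filling" where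
  "fill L S = (\<lambda>(i,j). if S 0 i \<le> j \<and> j < S (length L) i then Some (L ! (LEAST t. j < S (Suc t) i)) else None)"

definition recv :: "letter list \<Rightarrow> (nat\<Rightarrow>nat) \<Rightarrow> (nat\<Rightarrow>nat) \<Rightarrow> filling \<Rightarrow> chainf" where
  "recv L mu la T t i = (LEAST j. mu i \<le> j \<and> (la i \<le> j \<or> t \<le> pos L (the (T (i,j)))))"

definition cw :: "nat \<Rightarrow> letter list \<Rightarrow> chainf \<Rightarrow> letter \<Rightarrow> nat" where
  "cw N L S a = (if a \<in> set L then (\<Sum>i<N. S (Suc (pos L a)) i - S (pos L a) i) else 0)"

lemma card_le1I: "(\<And>x y. x \<in> A \<Longrightarrow> y \<in> A \<Longrightarrow> x = y) \<Longrightarrow> card A \<le> 1"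
proof (cases "A = {}")
  case False
  assume h: "\<And>x y. x \<in> A \<Longrightarrow> y \<in> A \<Longrightarrow> x = y"
  then obtain x where "A = {x}" using False by blast
  then show ?thesis by simp
qed simp

lemma dec_mono: "dec f \<Longrightarrow> i \<le> i' \<Longrightarrow> f i' \<le> f i"
  unfolding dec_def by (rule lift_Suc_antimono_le) auto

locale sh =
  fixes la mu :: "nat \<Rightarrow> nat" and N :: nat and L :: "letter list"
  assumes dla: "dec la" and dmu: "dec mu" and mula: "\<And>i. mu i \<le> la i"
    and zer: "\<And>i. N \<le> i \<Longrightarrow> la i = 0" and dist: "distinct L"
begin

abbreviation "n \<equiv> length L"
definition "C = {(i,j). mu i \<le> j \<and> j < la i}"

lemma finC: "finite C"
proof -
  have "C \<subseteq> {..<N} \<times> {..<la 0}"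
  proof
    fix c assume "c \<in> C"
    then obtain i j where c: "c = (i,j)" "mu i \<le> j" "j < la i" unfolding C_def by auto
    have "la i \<le> la 0" using dec_mono[OF dla] by simp
    moreover have "i < N" using zer[of i] c by (cases "N \<le> i") auto
    ultimately show "c \<in> {..<N} \<times> {..<la 0}" using c by auto
  qed
  then show ?thesis by (rule finite_subset) auto
qed

section \<open>chains\<close>

context
  fixes S assumes ch: "chain L mu la S"
begin

lemma S0: "S 0 = mu" and Sn: "t \<ge> n \<Longrightarrow> S t = la" and Sdec: "dec (S t)"
  and Sstrip: "t < n \<Longrightarrow> strip (snd (L!t)) (S t) (S (Suc t))"
  using ch unfolding chain_def by auto

lemma Ssuc: "S t i \<le> S (Suc t) i"
  using Sstrip[of t] Sn[of t] Sn[of "Suc t"] unfolding strip_def by (cases "t < n") auto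

lemma Smono: "t \<le> t' \<Longrightarrow> S t i \<le> S t' i"
  by (rule lift_Suc_mono_le[of "\<lambda>t. S t i"]) (auto intro: Ssuc)

lemma Sla: "S t i \<le> la i"
  using Smono[of t "max t n" i] Sn[of "max t n"] by simp

lemma Smu: "mu i \<le> S t i"
  using Smono[of 0 t i] S0 by simp

lemma Srow: "i \<le> i' \<Longrightarrow> S t i' \<le> S t i"
  using dec_mono[OF Sdec] by blast

lemma Szero: "N \<le> i \<Longrightarrow> S t i = 0"
  using Sla[of t i] zer[of i] by simp

lemma slot_unique:
  assumes "S t i \<le> j" "j < S (Suc t) i" "S t' i \<le> j" "j < S (Suc t') i"
  shows "t = t'"
proof (rule ccontr)
  assume "t \<noteq> t'"
  then have "Suc t \<le> t' \<or> Suc t' \<le> t" by auto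
  then show False using Smono[of "Suc t" t' i] Smono[of "Suc t'" t i] assms by auto
qed

lemma slot_exists:
  assumes "S 0 i \<le> j" "j < S n i"
  shows "\<exists>t<n. S t i \<le> j \<and> j < S (Suc t) i \<and> fill L S (i,j) = Some (L!t)"
proof -
  have "n \<noteq> 0" using assms S0 Sn[of 0] by (cases "n = 0") auto
  then obtain n' where n': "n = Suc n'" by (cases n) auto
  define t0 where "t0 = (LEAST t. j < S (Suc t) i)"
  have 1: "j < S (Suc t0) i" unfolding t0_def by (rule LeastI[of _ n']) (use assms n' in simp)
  have 2: "t0 \<le> n'" unfolding t0_def by (rule Least_le) (use assms n' in simp)
  have 3: "S t0 i \<le> j"
  proof (cases t0)
    case 0 then show ?thesis using assms by simp
  next
    case (Suc t1)
    then have "t1 < t0" by simp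
    then have "\<not> j < S (Suc t1) i" unfolding t0_def by (rule not_less_Least)
    then show ?thesis using Suc by simp
  qed
  have "fill L S (i,j) = Some (L!t0)" unfolding fill_def t0_def using assms by simp
  then show ?thesis using 1 2 3 n' by (intro exI[of _ t0]) auto
qed

lemma fill_Some_iff:
  assumes "t < n"
  shows "fill L S (i,j) = Some (L!t) \<longleftrightarrow> S t i \<le> j \<and> j < S (Suc t) i"
proof
  assume h: "fill L S (i,j) = Some (L!t)"
  then have r: "S 0 i \<le> j \<and> j < S n i" unfolding fill_def by (auto split: if_splits)
  then obtain t' where t': "t' < n" "S t' i \<le> j" "j < S (Suc t') i" "fill L S (i,j) = Some (L!t')"
    using slot_exists by blast
  then have "L!t = L!t'" using h by simp
  then have "t = t'" using dist assms t'(1) by (simp add: nth_eq_iff_index_eq)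
  then show "S t i \<le> j \<and> j < S (Suc t) i" using t' by simp
next
  assume h: "S t i \<le> j \<and> j < S (Suc t) i"
  have "S 0 i \<le> j" using h Smono[of 0 t i] by simp
  moreover have "j < S n i" using h Smono[of "Suc t" n i] assms by simp
  ultimately obtain t' where t': "t' < n" "S t' i \<le> j" "j < S (Suc t') i" "fill L S (i,j) = Some (L!t')"
    using slot_exists by blast
  then have "t = t'" using slot_unique h by blast
  then show "fill L S (i,j) = Some (L!t)" using t' by simp
qed

lemma fill_SomeD:
  assumes "fill L S (i,j) = Some a"
  shows "\<exists>t<n. a = L!t \<and> S t i \<le> j \<and> j < S (Suc t) i"
proof -
  have r: "S 0 i \<le> j \<and> j < S n i" using assms unfolding fill_def by (auto split: if_splits)
  then obtain t where "t < n" "S t i \<le> j" "j < S (Suc t) i" "fill L S (i,j) = Some (L!t)"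
    using slot_exists by blast
  then show ?thesis using assms by auto
qed

lemma fill_None_iff: "fill L S (i,j) \<noteq> None \<longleftrightarrow> (i,j) \<in> C"
  unfolding fill_def C_def using S0 Sn[of n] by auto

lemma fill_tab: "fill L S \<in> Ltab L C"
  unfolding Ltab_def tabw_def mem_Collect_eq
proof (intro conjI allI impI)
  fix c show "fill L S c \<noteq> None \<longleftrightarrow> c \<in> C" using fill_None_iff by (cases c) auto
next
  fix c a assume h: "fill L S c = Some a"
  obtain i j where "c = (i,j)" by (cases c)
  then obtain t where "t < n" "a = L!t" using fill_SomeD h by blast
  then show "a \<in> set L" by simp
next
  fix i j j' a b assume h: "fill L S (i, j) = Some a \<and> fill L S (i, j') = Some b \<and> j \<le> j'"
  obtain t where t: "t < n" "a = L!t" "S t i \<le> j" "j < S (Suc t) i"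
    using fill_SomeD h by blast
  obtain t' where t': "t' < n" "b = L!t'" "S t' i \<le> j'" "j' < S (Suc t') i"
    using fill_SomeD h by blast
  have "t \<le> t'"
  proof (rule ccontr)
    assume "\<not> t \<le> t'"
    then have "S (Suc t') i \<le> S t i" using Smono by simp
    then show False using t t' h by simp
  qed
  then show "int (pos L a) \<le> int (pos L b)" using t t' pos_nth[OF dist] by simp
next
  fix i i' j a b assume h: "fill L S (i, j) = Some a \<and> fill L S (i', j) = Some b \<and> i \<le> i'"
  obtain t where t: "t < n" "a = L!t" "S t i \<le> j" "j < S (Suc t) i"
    using fill_SomeD h by blast
  obtain t' where t': "t' < n" "b = L!t'" "S t' i' \<le> j" "j < S (Suc t') i'"
    using fill_SomeD h by blast
  have "t \<le> t'"
  proof (rule ccontr)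
    assume "\<not> t \<le> t'"
    then have "S (Suc t') i \<le> S t i" using Smono by simp
    moreover have "S (Suc t') i' \<le> S (Suc t') i" using Srow h by simp
    ultimately show False using t t' by simp
  qed
  then show "int (pos L a) \<le> int (pos L b)" using t t' pos_nth[OF dist] by simp
next
  fix r v
  show "card {j. fill L S (r, j) = Some (v, True)} \<le> 1"
  proof (rule card_le1I)
    fix x y assume "x \<in> {j. fill L S (r, j) = Some (v, True)}" "y \<in> {j. fill L S (r, j) = Some (v, True)}"
    then have hx: "fill L S (r, x) = Some (v, True)" and hy: "fill L S (r, y) = Some (v, True)" by auto
    obtain t where t: "t < n" "(v,True) = L!t" "S t r \<le> x" "x < S (Suc t) r"
      using fill_SomeD[OF hx] by blast
    obtain t' where t': "t' < n" "(v,True) = L!t'" "S t' r \<le> y" "y < S (Suc t') r"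
      using fill_SomeD[OF hy] by blast
    have "t = t'" using t(2) t'(2) nth_eq_iff_index_eq[OF dist t(1) t'(1)] by simp
    moreover have sp: "strip True (S t) (S (Suc t))" using Sstrip[OF t(1)] t(2)[symmetric] by simp
    then have "S (Suc t) r \<le> Suc (S t r)" unfolding strip_def by simp
    ultimately show "x = y" using t t' by simp
  qed
next
  fix col v
  show "card {i. fill L S (i, col) = Some (v, False)} \<le> 1"
  proof (rule card_le1I)
    have key: "False" if xy: "x < y" "fill L S (x, col) = Some (v, False)" "fill L S (y, col) = Some (v, False)" for x y
    proof -
      obtain t where t: "t < n" "(v,False) = L!t" "S t x \<le> col" "col < S (Suc t) x"
        using fill_SomeD[OF xy(2)] by blast
      obtain t' where t': "t' < n" "(v,False) = L!t'" "S t' y \<le> col" "col < S (Suc t') y"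
        using fill_SomeD[OF xy(3)] by blast
      have tt: "t = t'" using t(2) t'(2) nth_eq_iff_index_eq[OF dist t(1) t'(1)] by simp
      have sp: "strip False (S t) (S (Suc t))" using Sstrip[OF t(1)] t(2)[symmetric] by simp
      then have st: "\<And>i. S (Suc t) (Suc i) \<le> S t i" unfolding strip_def by simp
      have "S (Suc t) y \<le> S (Suc t) (Suc x)" using Srow xy(1) by simp
      then show False using st[of x] t t' tt by simp
    qed
    fix x y assume "x \<in> {i. fill L S (i, col) = Some (v, False)}" "y \<in> {i. fill L S (i, col) = Some (v, False)}"
    then have "fill L S (x, col) = Some (v, False)" "fill L S (y, col) = Some (v, False)" by auto
    then show "x = y" using key by (cases x y rule: linorder_cases) auto
  qed
qed

lemma cnt_fill: "cnt (fill L S) a = cw N L S a"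
proof (cases "a \<in> set L")
  case False
  have "{c. fill L S c = Some a} = {}"
  proof (rule ccontr)
    assume "{c. fill L S c = Some a} \<noteq> {}"
    then obtain i j where "fill L S (i,j) = Some a" by auto
    then obtain t where "t < n" "a = L!t" using fill_SomeD by blast
    then show False using False by simp
  qed
  then show ?thesis using False unfolding cnt_def cw_def by (simp only: card.empty if_False)
next
  case True
  define t where "t = pos L a"
  have t: "t < n" "L ! t = a" using pos_in[OF True] unfolding t_def by auto
  have "{c. fill L S c = Some a} = Sigma {..<N} (\<lambda>i. {S t i..<S (Suc t) i})"
  proof (intro set_eqI iffI)
    fix c assume "c \<in> {c. fill L S c = Some a}"
    then show "c \<in> Sigma {..<N} (\<lambda>i. {S t i..<S (Suc t) i})"
      using fill_Some_iff[OF t(1)] t(2) Szero[of _ "Suc t"] by (cases c) (force simp: not_less)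
  next
    fix c assume "c \<in> Sigma {..<N} (\<lambda>i. {S t i..<S (Suc t) i})"
    then show "c \<in> {c. fill L S c = Some a}"
      using fill_Some_iff[OF t(1)] t(2) by (cases c) auto
  qed
  then show ?thesis unfolding cnt_def cw_def using True t_def by (simp add: card_SigmaI)
qed

end

end



context sh begin

lemma recv_fill:
  assumes ch: "chain L mu la S"
  shows "recv L mu la (fill L S) = S"
proof (intro ext)
  fix t i
  note S0 = S0[OF ch] and Sn = Sn[OF ch] and Smono = Smono[OF ch]
  show "recv L mu la (fill L S) t i = S t i"
    unfolding recv_def
  proof (rule Least_equality)
    show "mu i \<le> S t i \<and> (la i \<le> S t i \<or> t \<le> pos L (the (fill L S (i, S t i))))"
    proof (cases "la i \<le> S t i")
      case False
      have "S 0 i \<le> S t i" using Smono by simp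
      moreover have "S t i < S n i" using False Sn by simp
      ultimately obtain t' where t': "t' < n" "S t' i \<le> S t i" "S t i < S (Suc t') i" "fill L S (i, S t i) = Some (L!t')"
        using slot_exists[OF ch] by blast
      have "t \<le> t'"
      proof (rule ccontr)
        assume "\<not> t \<le> t'" then have "S (Suc t') i \<le> S t i" using Smono by simp
        then show False using t' by simp
      qed
      then show ?thesis using t' pos_nth[OF dist] Smu[OF ch] by simp
    qed (use Smu[OF ch] in auto)
  next
    fix y assume y: "mu i \<le> y \<and> (la i \<le> y \<or> t \<le> pos L (the (fill L S (i, y))))"
    show "S t i \<le> y"
    proof (rule ccontr)
      assume "\<not> S t i \<le> y"
      then have yl: "y < S t i" by simp
      have "S 0 i \<le> y" using y S0 by simp
      moreover have "y < S n i" using yl Sla[OF ch, of t i] Sn by simp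
      ultimately obtain t' where t': "t' < n" "S t' i \<le> y" "y < S (Suc t') i" "fill L S (i, y) = Some (L!t')"
        using slot_exists[OF ch] by blast
      have "t' < t"
      proof (rule ccontr)
        assume "\<not> t' < t" then have "S t i \<le> S t' i" using Smono by simp
        then show False using t' yl by simp
      qed
      moreover have "\<not> la i \<le> y" using yl Sla[OF ch, of t i] by simp
      ultimately show False using y t' pos_nth[OF dist] by simp
    qed
  qed
qed

context
  fixes T assumes tab: "T \<in> Ltab L C"
begin

lemma Tall: "tabw (\<lambda>a. int (pos L a)) (\<lambda>a. a \<in> set L) C T"
  using tab unfolding Ltab_def by simp

lemma Tdom: "T c \<noteq> None \<longleftrightarrow> c \<in> C"
  using Tall unfolding tabw_def by blast
lemma Talph: "T c = Some a \<Longrightarrow> a \<in> set L"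
  using Tall unfolding tabw_def by blast
lemma Trow: assumes "T (i, j) = Some a" "T (i, j') = Some b" "j \<le> j'" shows "pos L a \<le> pos L b"
proof -
  have "int (pos L a) \<le> int (pos L b)" using Tall assms unfolding tabw_def by blast
  then show ?thesis by simp
qed
lemma Tcol: assumes "T (i, j) = Some a" "T (i', j) = Some b" "i \<le> i'" shows "pos L a \<le> pos L b"
proof -
  have "int (pos L a) \<le> int (pos L b)" using Tall assms unfolding tabw_def by blast
  then show ?thesis by simp
qed
lemma Tcr: "card {j. T (r, j) = Some (v, True)} \<le> 1"
  using Tall unfolding tabw_def by blast
lemma Tcc: "card {i. T (i, col) = Some (v, False)} \<le> 1"
  using Tall unfolding tabw_def by blast

abbreviation "p i j \<equiv> pos L (the (T (i,j)))"

lemma Tcell: assumes "(i,j) \<in> C" shows "T (i,j) = Some (L ! p i j) \<and> p i j < n"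
proof -
  have "T (i,j) \<noteq> None" using Tdom[of "(i,j)"] assms by simp
  then obtain a where a: "T (i,j) = Some a" by blast
  then show ?thesis using pos_in[OF Talph[OF a]] by simp
qed

lemma prow: assumes "(i,j) \<in> C" "(i,j') \<in> C" "j \<le> j'" shows "p i j \<le> p i j'"
proof -
  have "pos L (L ! p i j) \<le> pos L (L ! p i j')"
    by (rule Trow[OF conjunct1[OF Tcell[OF assms(1)]] conjunct1[OF Tcell[OF assms(2)]] assms(3)])
  then show ?thesis using pos_nth[OF dist] Tcell[OF assms(1)] Tcell[OF assms(2)] by simp
qed

lemma pcol: assumes "(i,j) \<in> C" "(i',j) \<in> C" "i \<le> i'" shows "p i j \<le> p i' j"
proof -
  have "pos L (L ! p i j) \<le> pos L (L ! p i' j)"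
    by (rule Tcol[OF conjunct1[OF Tcell[OF assms(1)]] conjunct1[OF Tcell[OF assms(2)]] assms(3)])
  then show ?thesis using pos_nth[OF dist] Tcell[OF assms(1)] Tcell[OF assms(2)] by simp
qed

abbreviation "R \<equiv> recv L mu la T"

lemma R_props: "mu i \<le> R t i \<and> (la i \<le> R t i \<or> t \<le> p i (R t i))" and R_la: "R t i \<le> la i"
proof -
  have P: "mu i \<le> la i \<and> (la i \<le> la i \<or> t \<le> p i (la i))" using mula by simp
  show "mu i \<le> R t i \<and> (la i \<le> R t i \<or> t \<le> p i (R t i))" unfolding recv_def by (rule LeastI[of "\<lambda>j. mu i \<le> j \<and> (la i \<le> j \<or> t \<le> p i j)" "la i", OF P])
  show "R t i \<le> la i" unfolding recv_def by (rule Least_le[of "\<lambda>j. mu i \<le> j \<and> (la i \<le> j \<or> t \<le> p i j)" "la i", OF P])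
qed

lemma R_char: assumes "mu i \<le> j" shows "j < R t i \<longleftrightarrow> (j < la i \<and> p i j < t)"
proof
  assume "j < R t i"
  then have "\<not> (mu i \<le> j \<and> (la i \<le> j \<or> t \<le> p i j))" unfolding recv_def by (rule not_less_Least)
  then show "j < la i \<and> p i j < t" using assms by auto
next
  assume h: "j < la i \<and> p i j < t"
  show "j < R t i"
  proof (rule ccontr)
    assume "\<not> j < R t i"
    then have Rj: "R t i \<le> j" by simp
    have "mu i \<le> R t i" "la i \<le> R t i \<or> t \<le> p i (R t i)" using R_props by auto
    moreover have "p i (R t i) \<le> p i j"
      using prow[of i "R t i" j] Rj h \<open>mu i \<le> R t i\<close> assms unfolding C_def by auto
    ultimately show False using h Rj by auto
  qed
qed

lemma finrow: "finite {j. T (r, j) = Some a}"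
proof -
  have "{j. T (r, j) = Some a} \<subseteq> snd ` C"
  proof
    fix j assume "j \<in> {j. T (r, j) = Some a}"
    then have "(r,j) \<in> C" using Tdom[of "(r,j)"] by simp
    then show "j \<in> snd ` C" by (rule image_eqI[rotated]) simp
  qed
  then show ?thesis by (rule finite_subset[OF _ finite_imageI[OF finC]])
qed

lemma fincol: "finite {i. T (i, col) = Some a}"
proof -
  have "{i. T (i, col) = Some a} \<subseteq> fst ` C"
  proof
    fix i assume "i \<in> {i. T (i, col) = Some a}"
    then have "(i,col) \<in> C" using Tdom[of "(i,col)"] by simp
    then show "i \<in> fst ` C" by (rule image_eqI[rotated]) simp
  qed
  then show ?thesis by (rule finite_subset[OF _ finite_imageI[OF finC]])
qed

lemma R_chain: "chain L mu la R"
  unfolding chain_def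
proof (intro conjI allI impI)
  show "R 0 = mu"
  proof
    fix i show "R 0 i = mu i" unfolding recv_def by (rule Least_equality) auto
  qed
next
  fix t assume t: "n \<le> t"
  show "R t = la"
  proof
    fix i show "R t i = la i"
    proof (rule antisym)
      show "R t i \<le> la i" by (rule R_la)
      show "la i \<le> R t i"
      proof (rule ccontr)
        assume "\<not> la i \<le> R t i"
        then have "(i, R t i) \<in> C" using R_props unfolding C_def by auto
        then have "p i (R t i) < n" using Tcell by blast
        then show False using R_props[of i t] t \<open>\<not> la i \<le> R t i\<close> by auto
      qed
    qed
  qed
next
  fix t show "dec (R t)" unfolding dec_def
  proof
    fix i show "R t (Suc i) \<le> R t i"
    proof (rule ccontr)
      assume "\<not> R t (Suc i) \<le> R t i"
      then have j: "R t i < R t (Suc i)" by simp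
      define j where "j = R t i"
      have mi: "mu i \<le> j" using R_props unfolding j_def by blast
      have ms: "mu (Suc i) \<le> j" using mi dmu unfolding dec_def by (blast intro: le_trans)
      have c1: "j < la (Suc i) \<and> p (Suc i) j < t" using R_char[OF ms] j unfolding j_def by simp
      have c0: "(i,j) \<in> C" using c1 mi dla unfolding C_def dec_def by (auto intro: less_le_trans)
      have "p i j \<le> p (Suc i) j" using pcol[OF c0, of "Suc i"] c1 ms unfolding C_def by simp
      then have "j < R t i" using R_char[OF mi] c0 c1 unfolding C_def by simp
      then show False unfolding j_def by simp
    qed
  qed
next
  fix t assume t: "t < n"
  obtain v mk where vm: "L ! t = (v, mk)" by (cases "L!t")
  have mono: "R t i \<le> R (Suc t) i" for i
  proof (rule ccontr)
    assume "\<not> R t i \<le> R (Suc t) i"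
    moreover have "mu i \<le> R (Suc t) i" using R_props by blast
    ultimately show False using R_char[of i "R (Suc t) i" t] R_char[of i "R (Suc t) i" "Suc t"] by auto
  qed
  have eqt: "T (i,j) = Some (L!t)" if "mu i \<le> j" "R t i \<le> j" "j < R (Suc t) i" for i j
  proof -
    have h1: "j < la i \<and> p i j < Suc t" using R_char[OF that(1)] that by simp
    moreover have "\<not> j < R t i" using that(2) by simp
    then have "p i j \<ge> t" using R_char[OF that(1), of t] h1 by auto
    ultimately have "p i j = t" "(i,j) \<in> C" using that unfolding C_def by auto
    then show ?thesis using Tcell[OF \<open>(i,j) \<in> C\<close>] by simp
  qed
  show "strip (snd (L!t)) (R t) (R (Suc t))"
  proof (cases mk)
    case True
    have "R (Suc t) i \<le> Suc (R t i)" for i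
    proof (rule ccontr)
      assume "\<not> R (Suc t) i \<le> Suc (R t i)"
      then have lt: "Suc (R t i) < R (Suc t) i" by simp
      have mi: "mu i \<le> R t i" using R_props by blast
      have "{R t i, Suc (R t i)} \<subseteq> {j. T (i, j) = Some (v, True)}"
        using eqt[of i "R t i"] eqt[of i "Suc (R t i)"] lt mi vm True by auto
      then have "card {R t i, Suc (R t i)} \<le> card {j. T (i, j) = Some (v, True)}"
        using finrow by (rule card_mono[rotated])
      then show False using Tcr[of i v] by simp
    qed
    then show ?thesis unfolding strip_def using mono vm True by simp
  next
    case False
    have "R (Suc t) (Suc i) \<le> R t i" for i
    proof (rule ccontr)
      assume "\<not> R (Suc t) (Suc i) \<le> R t i"
      then have lt: "R t i < R (Suc t) (Suc i)" by simp
      define j where "j = R t i"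
      have mi: "mu i \<le> j" using R_props unfolding j_def by blast
      have ms: "mu (Suc i) \<le> j" using mi dmu unfolding dec_def by (blast intro: le_trans)
      have c1: "j < la (Suc i) \<and> p (Suc i) j < Suc t" using R_char[OF ms] lt unfolding j_def by simp
      have c0: "(i,j) \<in> C" using c1 mi dla unfolding C_def dec_def by (auto intro: less_le_trans)
      have cs: "(Suc i, j) \<in> C" using c1 ms unfolding C_def by simp
      have "j < la i" using c0 unfolding C_def by simp
      moreover have "\<not> j < R t i" unfolding j_def by simp
      ultimately have "p i j \<ge> t" using R_char[OF mi, of t] by auto
      moreover have "p i j \<le> p (Suc i) j" using pcol[OF c0 cs] by simp
      ultimately have "p i j = t" "p (Suc i) j = t" using c1 by auto
      then have "T (i,j) = Some (v,False)" "T (Suc i, j) = Some (v, False)"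
        using Tcell[OF c0] Tcell[OF cs] vm False by auto
      then have "{i, Suc i} \<subseteq> {i'. T (i', j) = Some (v, False)}" by auto
      then have "card {i, Suc i} \<le> card {i'. T (i', j) = Some (v, False)}"
        using fincol by (rule card_mono[rotated])
      then show False using Tcc[of j v] by simp
    qed
    then show ?thesis unfolding strip_def using mono vm False by simp
  qed
qed

lemma fill_R: "fill L R = T"
proof
  fix c :: "nat \<times> nat"
  obtain i j where c: "c = (i,j)" by (cases c)
  have ch: "chain L mu la R" by (rule R_chain)
  show "fill L R c = T c"
  proof (cases "(i,j) \<in> C")
    case False
    have "fill L R (i,j) = None" using fill_None_iff[OF ch, of i j] False by blast
    moreover have "T (i,j) = None" using Tdom[of "(i,j)"] False by blast
    ultimately show ?thesis using c by simp
  next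
    case True
    have r: "R 0 i \<le> j \<and> j < R n i" using fill_None_iff[OF ch, of i j] True
      unfolding fill_def by (auto split: if_splits)
    have "(LEAST t. j < R (Suc t) i) = p i j"
    proof (rule Least_equality)
      show "j < R (Suc (p i j)) i" using R_char[of i j] True unfolding C_def by auto
    next
      fix y assume "j < R (Suc y) i"
      then show "p i j \<le> y" using R_char[of i j] True unfolding C_def by auto
    qed
    then show ?thesis unfolding fill_def c using r Tcell[OF True] by simp
  qed
qed

end

lemma fill_bij: "bij_betw (fill L) {S. chain L mu la S} (Ltab L C)"
proof (rule bij_betw_byWitness[where f' = "recv L mu la"])
  show "\<forall>S\<in>{S. chain L mu la S}. recv L mu la (fill L S) = S" using recv_fill by blast
  show "\<forall>T\<in>Ltab L C. fill L (recv L mu la T) = T" using fill_R by blast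
  show "fill L ` {S. chain L mu la S} \<subseteq> Ltab L C" using fill_tab by blast
  show "recv L mu la ` Ltab L C \<subseteq> {S. chain L mu la S}" using R_chain by blast
qed

end



lemma chain_replace:
  assumes ch: "chain L1 mu la S" and len: "length L2 = length L1" and tn: "Suc t < length L1"
    and oth: "\<And>u. u \<noteq> t \<Longrightarrow> u \<noteq> Suc t \<Longrightarrow> L1!u = L2!u"
    and m: "m \<in> Mid (snd (L2!t)) (snd (L2!Suc t)) (S t) (S (Suc (Suc t)))"
  shows "chain L2 mu la (S(Suc t := m))"
proof -
  have c0: "S 0 = mu" and cn: "\<And>u. length L1 \<le> u \<Longrightarrow> S u = la" and cd: "\<And>u. dec (S u)"
    and cs: "\<And>u. u < length L1 \<Longrightarrow> strip (snd (L1!u)) (S u) (S (Suc u))"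
    using ch unfolding chain_def by auto
  have md: "dec m" and m1: "strip (snd (L2!t)) (S t) m" and m2: "strip (snd (L2!Suc t)) m (S (Suc (Suc t)))"
    using m unfolding Mid_def by auto
  show ?thesis unfolding chain_def
  proof (intro conjI allI impI)
    show "(S(Suc t := m)) 0 = mu" using c0 by simp
  next
    fix u assume "length L2 \<le> u" then show "(S(Suc t := m)) u = la" using cn len tn by simp
  next
    fix u show "dec ((S(Suc t := m)) u)" using md cd by (cases "u = Suc t") auto
  next
    fix u assume u: "u < length L2"
    show "strip (snd (L2!u)) ((S(Suc t := m)) u) ((S(Suc t := m)) (Suc u))"
    proof (cases "u = t")
      case True then show ?thesis using m1 by simp
    next
      case False
      show ?thesis
      proof (cases "u = Suc t")
        case True then show ?thesis using m2 by simp
      next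
        case False2: False
        then show ?thesis using False cs[of u] u len oth[OF False False2] by simp
      qed
    qed
  qed
qed

lemma chain_swap:
  assumes shL: "sh la mu N (xs@a#b#ys)" and nm: "\<not> (snd a \<and> snd b)"
  shows "\<exists>\<Phi>. bij_betw \<Phi> {S. chain (xs@a#b#ys) mu la S} {S. chain (xs@b#a#ys) mu la S} \<and>
     (\<forall>S. chain (xs@a#b#ys) mu la S \<longrightarrow> cw N (xs@b#a#ys) (\<Phi> S) = cw N (xs@a#b#ys) S)"
proof -
  define L where "L = xs@a#b#ys"
  define L' where "L' = xs@b#a#ys"
  define t where "t = length xs"
  interpret A: sh la mu N L using shL unfolding L_def .
  have dL': "distinct L'" using A.dist unfolding L_def L'_def by auto
  interpret B: sh la mu N L' using A.dla A.dmu A.mula A.zer dL' by unfold_locales auto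
  have len: "length L' = length L" unfolding L_def L'_def by simp
  have tn: "Suc t < length L" unfolding L_def t_def by simp
  have La: "L!t = a" "L!Suc t = b" "L'!t = b" "L'!Suc t = a"
    unfolding L_def L'_def t_def by (simp_all add: nth_append)
  have Lo: "L!u = L'!u" if "u \<noteq> t" "u \<noteq> Suc t" for u
  proof (cases "u < t")
    case True then show ?thesis unfolding L_def L'_def t_def by (simp add: nth_append)
  next
    case False
    then have "Suc (Suc t) \<le> u" using that by auto
    then obtain k where k: "u = Suc (Suc t) + k" using le_Suc_ex by blast
    then show ?thesis unfolding L_def L'_def t_def by (simp add: nth_append)
  qed
  have setL: "set L' = set L" unfolding L_def L'_def by auto
  define G where "G A B = (SOME g. bij_betw g (Mid (snd a) (snd b) A B) (Mid (snd b) (snd a) A B) \<and>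
      (\<forall>m\<in>Mid (snd a) (snd b) A B. sz N B - sz N (g m) = sz N m - sz N A))" for A B
  have Gp: "bij_betw (G A B) (Mid (snd a) (snd b) A B) (Mid (snd b) (snd a) A B) \<and>
      (\<forall>m\<in>Mid (snd a) (snd b) A B. sz N B - sz N (G A B m) = sz N m - sz N A)"
    if "dec A" "dec B" "\<And>i. A i \<le> B i" "\<And>i. N \<le> i \<Longrightarrow> B i = 0" for A B
  proof -
    have "\<exists>g. bij_betw g (Mid (snd a) (snd b) A B) (Mid (snd b) (snd a) A B) \<and>
      (\<forall>m\<in>Mid (snd a) (snd b) A B. sz N B - sz N (g m) = sz N m - sz N A)"
      by (rule Mid_swap[OF that nm])
    then show ?thesis unfolding G_def by (rule someI_ex)
  qed
  define \<Phi> where "\<Phi> S = S(Suc t := G (S t) (S (Suc (Suc t))) (S (Suc t)))" for S :: chainf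
  define \<Psi> where "\<Psi> S = S(Suc t := inv_into (Mid (snd a) (snd b) (S t) (S (Suc (Suc t))))
      (G (S t) (S (Suc (Suc t)))) (S (Suc t)))" for S :: chainf
  have GpL: "bij_betw (G (S t) (S (Suc (Suc t)))) (Mid (snd a) (snd b) (S t) (S (Suc (Suc t)))) (Mid (snd b) (snd a) (S t) (S (Suc (Suc t)))) \<and>
      (\<forall>m\<in>Mid (snd a) (snd b) (S t) (S (Suc (Suc t))). sz N (S (Suc (Suc t))) - sz N (G (S t) (S (Suc (Suc t))) m) = sz N m - sz N (S t))"
    if "chain L mu la S" for S
    by (rule Gp) (use A.Sdec[OF that] A.Smono[OF that] A.Szero[OF that] in auto)
  have GpL': "bij_betw (G (S t) (S (Suc (Suc t)))) (Mid (snd a) (snd b) (S t) (S (Suc (Suc t)))) (Mid (snd b) (snd a) (S t) (S (Suc (Suc t))))"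
    if "chain L' mu la S" for S
    using Gp[of "S t" "S (Suc (Suc t))"] B.Sdec[OF that] B.Smono[OF that] B.Szero[OF that] by auto
  have midL: "S (Suc t) \<in> Mid (snd a) (snd b) (S t) (S (Suc (Suc t)))" if "chain L mu la S" for S
    using A.Sdec[OF that] A.Sstrip[OF that, of t] A.Sstrip[OF that, of "Suc t"] tn La unfolding Mid_def by simp
  have midL': "S (Suc t) \<in> Mid (snd b) (snd a) (S t) (S (Suc (Suc t)))" if "chain L' mu la S" for S
    using B.Sdec[OF that] B.Sstrip[OF that, of t] B.Sstrip[OF that, of "Suc t"] tn len La unfolding Mid_def by simp
  have PhiC: "chain L' mu la (\<Phi> S)" if ch: "chain L mu la S" for S
    unfolding \<Phi>_def
  proof (rule chain_replace[OF ch len tn Lo])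
    show "G (S t) (S (Suc (Suc t))) (S (Suc t)) \<in> Mid (snd (L' ! t)) (snd (L' ! Suc t)) (S t) (S (Suc (Suc t)))"
      using bij_betw_apply[OF conjunct1[OF GpL[OF ch]] midL[OF ch]] La by simp
  qed auto
  have PsiC: "chain L mu la (\<Psi> S)" if ch: "chain L' mu la S" for S
    unfolding \<Psi>_def
  proof (rule chain_replace[OF ch _ _ ])
    have "S (Suc t) \<in> G (S t) (S (Suc (Suc t))) ` Mid (snd a) (snd b) (S t) (S (Suc (Suc t)))"
      using GpL'[OF ch] midL'[OF ch] unfolding bij_betw_def by simp
    then show "inv_into (Mid (snd a) (snd b) (S t) (S (Suc (Suc t)))) (G (S t) (S (Suc (Suc t)))) (S (Suc t))
       \<in> Mid (snd (L ! t)) (snd (L ! Suc t)) (S t) (S (Suc (Suc t)))"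
      using inv_into_into La by simp
  qed (use len tn Lo in auto)
  have PsiPhi: "\<Psi> (\<Phi> S) = S" if ch: "chain L mu la S" for S
  proof -
    have "inv_into (Mid (snd a) (snd b) (S t) (S (Suc (Suc t)))) (G (S t) (S (Suc (Suc t))))
        (G (S t) (S (Suc (Suc t))) (S (Suc t))) = S (Suc t)"
      using GpL[OF ch] midL[OF ch] unfolding bij_betw_def by simp
    then show ?thesis unfolding \<Psi>_def \<Phi>_def by auto
  qed
  have PhiPsi: "\<Phi> (\<Psi> S) = S" if ch: "chain L' mu la S" for S
  proof -
    have "S (Suc t) \<in> G (S t) (S (Suc (Suc t))) ` Mid (snd a) (snd b) (S t) (S (Suc (Suc t)))"
      using GpL'[OF ch] midL'[OF ch] unfolding bij_betw_def by simp
    then have "G (S t) (S (Suc (Suc t))) (inv_into (Mid (snd a) (snd b) (S t) (S (Suc (Suc t)))) (G (S t) (S (Suc (Suc t)))) (S (Suc t))) = S (Suc t)"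
      by (rule f_inv_into_f)
    then show ?thesis unfolding \<Psi>_def \<Phi>_def by auto
  qed
  have bij: "bij_betw \<Phi> {S. chain L mu la S} {S. chain L' mu la S}"
    by (rule bij_betw_byWitness[where f'=\<Psi>]) (use PsiPhi PhiPsi PhiC PsiC in auto)
  have wt: "cw N L' (\<Phi> S) = cw N L S" if ch: "chain L mu la S" for S
  proof
    fix c
    define A where "A = S t"
    define B where "B = S (Suc (Suc t))"
    define m where "m = S (Suc t)"
    define g where "g = G A B m"
    have gm: "g \<in> Mid (snd b) (snd a) A B" unfolding g_def A_def B_def m_def
      using bij_betw_apply[OF conjunct1[OF GpL[OF ch]] midL[OF ch]] .
    have mm: "m \<in> Mid (snd a) (snd b) A B" unfolding A_def B_def m_def using midL[OF ch] .
    have gs: "sz N B - sz N g = sz N m - sz N A" using GpL[OF ch] midL[OF ch] unfolding g_def A_def B_def m_def by blast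
    have bm: "\<And>i. A i \<le> m i" "\<And>i. m i \<le> B i" using mm unfolding Mid_def strip_def by auto
    have bg: "\<And>i. A i \<le> g i" "\<And>i. g i \<le> B i" using gm unfolding Mid_def strip_def by auto
    have sm: "sz N A \<le> sz N m" "sz N m \<le> sz N B" using bm by (auto intro: sz_mono)
    have sg: "sz N A \<le> sz N g" "sz N g \<le> sz N B" using bg by (auto intro: sz_mono)
    have dif: "(\<Sum>i<N. Y i - X i) = sz N Y - sz N X" if "\<And>i. X i \<le> Y i" for X Y :: "nat \<Rightarrow> nat"
      unfolding sz_def using that by (simp add: sum_subtractf_nat)
    have PS: "\<Phi> S t = A" "\<Phi> S (Suc t) = g" "\<Phi> S (Suc (Suc t)) = B"
      unfolding \<Phi>_def A_def B_def g_def m_def by simp_all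
    show "cw N L' (\<Phi> S) c = cw N L S c"
    proof (cases "c \<in> set L")
      case False then show ?thesis unfolding cw_def setL by simp
    next
      case True
      define u where "u = pos L c"
      have u: "u < length L" "L!u = c" using pos_in[OF True] unfolding u_def by auto
      show ?thesis
      proof (cases "u = t")
        case True
        have "pos L' c = Suc t" using u La True pos_nth[OF dL', of "Suc t"] tn len by simp
        then have "cw N L' (\<Phi> S) c = sz N B - sz N g"
          unfolding cw_def using \<open>c \<in> set L\<close> setL PS dif[OF bg(2)] by simp
        moreover have "cw N L S c = sz N m - sz N A"
          unfolding cw_def using \<open>c \<in> set L\<close> u_def[symmetric] True dif[OF bm(1)] unfolding A_def m_def by simp
        ultimately show ?thesis using gs by simp
      next
        case False
        show ?thesis
        proof (cases "u = Suc t")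
          case True
          have "pos L' c = t" using u La True pos_nth[OF dL', of t] tn len by simp
          then have "cw N L' (\<Phi> S) c = sz N g - sz N A"
            unfolding cw_def using \<open>c \<in> set L\<close> setL PS dif[OF bg(1)] by simp
          moreover have "cw N L S c = sz N B - sz N m"
            unfolding cw_def using \<open>c \<in> set L\<close> u_def[symmetric] True dif[OF bm(2)] unfolding B_def m_def by simp
          ultimately show ?thesis using gs sm sg by linarith
        next
          case False2: False
          have "pos L' c = u" using u Lo[OF False False2] pos_nth[OF dL', of u] len by simp
          moreover have "\<Phi> S u = S u" "\<Phi> S (Suc u) = S (Suc u)" unfolding \<Phi>_def using False False2 by auto
          ultimately show ?thesis unfolding cw_def using \<open>c \<in> set L\<close> setL u_def by simp
        qed
      qed
    qed
  qed
  show ?thesis using bij wt unfolding L_def L'_def by blast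
qed



lemma swap_tab:
  assumes shL: "sh la mu N (xs@a#b#ys)" and nm: "\<not> (snd a \<and> snd b)"
  shows "\<exists>f. bij_betw f (Ltab (xs@a#b#ys) {(i,j). mu i \<le> j \<and> j < la i}) (Ltab (xs@b#a#ys) {(i,j). mu i \<le> j \<and> j < la i}) \<and>
     (\<forall>T\<in>Ltab (xs@a#b#ys) {(i,j). mu i \<le> j \<and> j < la i}. cnt (f T) = cnt T)"
proof -
  define L where "L = xs@a#b#ys"
  define L' where "L' = xs@b#a#ys"
  define C0 where "C0 = {(i,j). mu i \<le> j \<and> j < la i}"
  interpret A: sh la mu N L using shL unfolding L_def .
  have dL': "distinct L'" using A.dist unfolding L_def L'_def by auto
  interpret B: sh la mu N L' using A.dla A.dmu A.mula A.zer dL' by unfold_locales auto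
  have CA: "A.C = C0" unfolding A.C_def C0_def ..
  have CB: "B.C = C0" unfolding B.C_def C0_def ..
  obtain \<Phi> where bij: "bij_betw \<Phi> {S. chain L mu la S} {S. chain L' mu la S}"
    and wt: "\<And>S. chain L mu la S \<Longrightarrow> cw N L' (\<Phi> S) = cw N L S"
    using chain_swap[OF shL nm] unfolding L_def L'_def by blast
  have r: "bij_betw (recv L mu la) (Ltab L C0) {S. chain L mu la S}"
    by (rule bij_betw_byWitness[where f'="fill L"]) (use A.recv_fill A.fill_R A.R_chain A.fill_tab CA in auto)
  have f: "bij_betw (fill L') {S. chain L' mu la S} (Ltab L' C0)" using B.fill_bij CB by simp
  have "bij_betw (fill L' \<circ> (\<Phi> \<circ> recv L mu la)) (Ltab L C0) (Ltab L' C0)"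
    by (rule bij_betw_trans[OF bij_betw_trans[OF r bij] f])
  moreover have "cnt ((fill L' \<circ> (\<Phi> \<circ> recv L mu la)) T) = cnt T" if T: "T \<in> Ltab L C0" for T
  proof -
    have TA: "T \<in> Ltab L A.C" using T CA by simp
    define S where "S = recv L mu la T"
    have ch: "chain L mu la S" unfolding S_def by (rule A.R_chain[OF TA])
    have ch': "chain L' mu la (\<Phi> S)" using bij_betw_apply[OF bij] ch by simp
    have "cnt (fill L' (\<Phi> S)) = cw N L' (\<Phi> S)" using B.cnt_fill[OF ch'] by (intro ext) simp
    also have "\<dots> = cw N L S" by (rule wt[OF ch])
    also have "\<dots> = cnt (fill L S)" using A.cnt_fill[OF ch] by (intro ext) simp
    also have "fill L S = T" unfolding S_def by (rule A.fill_R[OF TA])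
    finally show ?thesis unfolding S_def by simp
  qed
  ultimately show ?thesis unfolding L_def[symmetric] L'_def[symmetric] C0_def[symmetric] by blast
qed

section \<open>Transposition\<close>

definition flip :: "letter \<Rightarrow> letter" where "flip a = (fst a, \<not> snd a)"
lemma flip_flip[simp]: "flip (flip a) = a" unfolding flip_def by simp
lemma flip_inj[simp]: "flip a = flip b \<longleftrightarrow> a = b" unfolding flip_def by (cases a; cases b) auto
lemma snd_flip[simp]: "snd (flip a) = (\<not> snd a)" unfolding flip_def by simp
lemma flip_eq: "flip a = b \<longleftrightarrow> a = flip b" by auto

definition tr :: "filling \<Rightarrow> filling" where "tr T = (\<lambda>(i,j). map_option flip (T (j,i)))"

lemma tr_apply: "tr T (i,j) = map_option flip (T (j,i))" unfolding tr_def by simp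
lemma tr_Some: "tr T (i,j) = Some a \<longleftrightarrow> T (j,i) = Some (flip a)"
  unfolding tr_apply by (cases "T (j,i)") (auto simp: flip_eq)
lemma tr_tr[simp]: "tr (tr T) = T"
proof
  fix c show "tr (tr T) c = T c" by (cases c) (simp add: tr_apply option.map_comp comp_def option.map_ident)
qed

lemma pos_map_flip: "pos (map flip L) a = pos L (flip a)"
  unfolding pos_def by (intro arg_cong[where f=Least] ext) (auto simp: flip_eq)

lemma map_flip_flip[simp]: "map flip (map flip L) = L" by (induction L) auto

lemma tr_tab: assumes "T \<in> Ltab L C" shows "tr T \<in> Ltab (map flip L) (prod.swap ` C)"
proof -
  have A: "tabw (\<lambda>a. int (pos L a)) (\<lambda>a. a \<in> set L) C T" using assms unfolding Ltab_def by simp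
  have dom: "\<And>c. T c \<noteq> None \<longleftrightarrow> c \<in> C" using A unfolding tabw_def by blast
  have alph: "\<And>c a. T c = Some a \<Longrightarrow> a \<in> set L" using A unfolding tabw_def by blast
  have rowm: "\<And>i j j' a b. T (i, j) = Some a \<Longrightarrow> T (i, j') = Some b \<Longrightarrow> j \<le> j' \<Longrightarrow> int (pos L a) \<le> int (pos L b)"
    using A unfolding tabw_def by blast
  have colm: "\<And>i i' j a b. T (i, j) = Some a \<Longrightarrow> T (i', j) = Some b \<Longrightarrow> i \<le> i' \<Longrightarrow> int (pos L a) \<le> int (pos L b)"
    using A unfolding tabw_def by blast
  have cr: "\<And>r v. card {j. T (r, j) = Some (v, True)} \<le> 1" using A unfolding tabw_def by blast
  have cc: "\<And>col v. card {i. T (i, col) = Some (v, False)} \<le> 1" using A unfolding tabw_def by blast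
  have fl: "\<And>v b. flip (v, b) = (v, \<not> b)" unfolding flip_def by simp
  show ?thesis unfolding Ltab_def tabw_def mem_Collect_eq
  proof (intro conjI allI impI)
    fix c :: "nat \<times> nat"
    obtain i j where c: "c = (i,j)" by (cases c)
    have "tr T c \<noteq> None \<longleftrightarrow> T (j,i) \<noteq> None" unfolding c tr_apply by simp
    also have "\<dots> \<longleftrightarrow> (j,i) \<in> C" by (rule dom)
    also have "\<dots> \<longleftrightarrow> c \<in> prod.swap ` C" unfolding c by force
    finally show "tr T c \<noteq> None \<longleftrightarrow> c \<in> prod.swap ` C" .
  next
    fix c :: "nat \<times> nat" and a assume h: "tr T c = Some a"
    obtain i j where c: "c = (i,j)" by (cases c)
    have "flip a \<in> set L" using alph h unfolding c tr_Some by blast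
    then show "a \<in> set (map flip L)" by (metis flip_flip image_eqI set_map)
  next
    fix i j j' a b assume h: "tr T (i, j) = Some a \<and> tr T (i, j') = Some b \<and> j \<le> j'"
    then show "int (pos (map flip L) a) \<le> int (pos (map flip L) b)"
      unfolding pos_map_flip tr_Some using colm by blast
  next
    fix i i' j a b assume h: "tr T (i, j) = Some a \<and> tr T (i', j) = Some b \<and> i \<le> i'"
    then show "int (pos (map flip L) a) \<le> int (pos (map flip L) b)"
      unfolding pos_map_flip tr_Some using rowm by blast
  next
    fix r v
    have "{j. tr T (r, j) = Some (v, True)} = {j. T (j, r) = Some (v, False)}"
      unfolding tr_Some fl by simp
    then show "card {j. tr T (r, j) = Some (v, True)} \<le> 1" using cc by simp
  next
    fix col v
    have "{i. tr T (i, col) = Some (v, False)} = {i. T (col, i) = Some (v, True)}"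
      unfolding tr_Some fl by simp
    then show "card {i. tr T (i, col) = Some (v, False)} \<le> 1" using cr by simp
  qed
qed

lemma swap_swap_img[simp]: "prod.swap ` prod.swap ` C = C"
  by (simp add: image_comp)

lemma tr_bij: "bij_betw tr (Ltab L C) (Ltab (map flip L) (prod.swap ` C))"
proof (rule bij_betw_byWitness[where f'=tr])
  show "tr ` Ltab L C \<subseteq> Ltab (map flip L) (prod.swap ` C)" using tr_tab by blast
  show "tr ` Ltab (map flip L) (prod.swap ` C) \<subseteq> Ltab L C" using tr_tab[of _ "map flip L" "prod.swap ` C"] by (auto simp: comp_def)
qed auto

lemma cnt_tr: "cnt (tr T) a = cnt T (flip a)"
proof -
  have "{c. tr T c = Some a} = prod.swap ` {c. T c = Some (flip a)}"
  proof (intro set_eqI iffI)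
    fix c assume "c \<in> {c. tr T c = Some a}"
    then show "c \<in> prod.swap ` {c. T c = Some (flip a)}"
      by (cases c) (force simp: tr_Some image_iff)
  next
    fix c assume "c \<in> prod.swap ` {c. T c = Some (flip a)}"
    then show "c \<in> {c. tr T c = Some a}" by (auto simp: tr_Some)
  qed
  then show ?thesis unfolding cnt_def by (simp add: card_image)
qed



section \<open>Partitions and conjugates\<close>

lemma part_beyond: "length lam \<le> i \<Longrightarrow> part lam i = 0" unfolding part_def by simp

lemma part_dec: assumes "is_partition lam" shows "dec (part lam)"
  unfolding dec_def
proof
  fix i show "part lam (Suc i) \<le> part lam i"
  proof (cases "Suc i < length lam")
    case True
    then show ?thesis using sorted_rev_nth_mono[of lam i "Suc i"] assms unfolding is_partition_def part_def by simp
  next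
    case False then show ?thesis unfolding part_def by simp
  qed
qed

lemma skew_sh: assumes "skew_shape lam mu" "distinct L" shows "sh (part lam) (part mu) (length lam) L"
  using assms part_dec part_beyond unfolding skew_shape_def by unfold_locales auto

lemma cells_eq: "cells lam mu = {(i,j). part mu i \<le> j \<and> j < part lam i}" unfolding cells_def by simp

definition conj :: "nat list \<Rightarrow> nat list" where
  "conj lam = map (\<lambda>j. card {i. j < part lam i}) [0..<part lam 0]"

lemma down_closed:
  assumes d: "dec f" and z: "\<And>i. N \<le> i \<Longrightarrow> f i = 0"
  shows "{i. j < f i} = {..<card {i. j < f i}}"
proof -
  have ex: "\<exists>i. \<not> j < f i" using z[of N] by (intro exI[of _ N]) simp
  define k where "k = (LEAST i. \<not> j < f i)"
  have k: "\<not> j < f k" unfolding k_def using LeastI_ex[OF ex] .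
  have "{i. j < f i} = {..<k}"
  proof (intro set_eqI iffI)
    fix i assume i: "i \<in> {i. j < f i}"
    show "i \<in> {..<k}"
    proof (rule ccontr)
      assume "i \<notin> {..<k}"
      then have "f i \<le> f k" using dec_mono[OF d] by simp
      then show False using i k by simp
    qed
  next
    fix i assume "i \<in> {..<k}"
    then have "i < k" by simp
    then have "\<not> \<not> j < f i" unfolding k_def by (rule not_less_Least)
    then show "i \<in> {i. j < f i}" by simp
  qed
  then show ?thesis by simp
qed

lemma part_conj: assumes "is_partition lam" shows "part (conj lam) j = card {i. j < part lam i}"
proof (cases "j < part lam 0")
  case True
  have "part (conj lam) j = conj lam ! j" unfolding part_def using True by (simp add: conj_def)
  then show ?thesis using True by (simp add: conj_def)
next
  case False
  have "{i. j < part lam i} = {}"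
  proof -
    have "part lam i \<le> part lam 0" for i using dec_mono[OF part_dec[OF assms]] by simp
    then show ?thesis using False by (auto intro: le_trans simp: not_less)
  qed
  moreover have "part (conj lam) j = 0" unfolding part_def using False by (simp add: conj_def)
  ultimately show ?thesis by simp
qed

lemma conj_iff: assumes "is_partition lam" shows "i < part (conj lam) j \<longleftrightarrow> j < part lam i"
proof -
  have "{i. j < part lam i} = {..<card {i. j < part lam i}}"
    by (rule down_closed[OF part_dec[OF assms] part_beyond])
  then have "{i. j < part lam i} = {..<part (conj lam) j}" using part_conj[OF assms] by simp
  then show ?thesis by (simp add: set_eq_iff)
qed

lemma fin_rows: "finite {i. j < part lam i}"
proof (rule finite_subset[of _ "{..<length lam}"])
  show "{i. j < part lam i} \<subseteq> {..<length lam}" using part_beyond by (force simp: not_less[symmetric])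
qed simp

lemma conj_partition: assumes "is_partition lam" shows "is_partition (conj lam)"
  unfolding is_partition_def sorted_rev_iff_nth_mono
proof (intro allI impI)
  fix i j assume ij: "i \<le> j" "j < length (conj lam)"
  have "{i'. j < part lam i'} \<subseteq> {i'. i < part lam i'}" using ij by auto
  then have "card {i'. j < part lam i'} \<le> card {i'. i < part lam i'}" using fin_rows by (rule card_mono[rotated])
  then show "conj lam ! j \<le> conj lam ! i" using ij unfolding conj_def by simp
qed

lemma conj_skew: assumes "skew_shape lam mu" shows "skew_shape (conj lam) (conj mu)"
proof -
  have p: "is_partition lam" "is_partition mu" and le: "\<And>i. part mu i \<le> part lam i"
    using assms unfolding skew_shape_def by auto
  have "part (conj mu) j \<le> part (conj lam) j" for j
  proof -
    have "{i. j < part mu i} \<subseteq> {i. j < part lam i}" using le by (auto intro: less_le_trans)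
    then show ?thesis unfolding part_conj[OF p(1)] part_conj[OF p(2)] using fin_rows by (rule card_mono[rotated])
  qed
  then show ?thesis unfolding skew_shape_def using conj_partition p by auto
qed

lemma conj_cells: assumes "skew_shape lam mu" shows "cells (conj lam) (conj mu) = prod.swap ` cells lam mu"
proof -
  have p: "is_partition lam" "is_partition mu" using assms unfolding skew_shape_def by auto
  show ?thesis
  proof (intro set_eqI iffI)
    fix c assume "c \<in> cells (conj lam) (conj mu)"
    then obtain j i where c: "c = (j,i)" "part (conj mu) j \<le> i" "i < part (conj lam) j" unfolding cells_def by auto
    then have "(i,j) \<in> cells lam mu" unfolding cells_def using conj_iff[OF p(1)] conj_iff[OF p(2)] by (auto simp: not_less[symmetric])
    then show "c \<in> prod.swap ` cells lam mu" using c by force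
  next
    fix c assume "c \<in> prod.swap ` cells lam mu"
    then obtain i j where c: "c = (j,i)" "(i,j) \<in> cells lam mu" by auto
    then show "c \<in> cells (conj lam) (conj mu)" unfolding cells_def using conj_iff[OF p(1)] conj_iff[OF p(2)]
      by (auto simp: not_less[symmetric])
  qed
qed

definition Rel :: "letter list \<Rightarrow> letter list \<Rightarrow> bool" where
  "Rel L L' \<longleftrightarrow> (\<forall>lam mu. skew_shape lam mu \<longrightarrow> (\<exists>f. bij_betw f (Ltab L (cells lam mu)) (Ltab L' (cells lam mu)) \<and>
      (\<forall>T\<in>Ltab L (cells lam mu). cnt (f T) = cnt T)))"

lemma Rel_refl: "Rel L L"
  unfolding Rel_def by (intro allI impI exI[of _ id]) auto

lemma Rel_trans: assumes "Rel L1 L2" "Rel L2 L3" shows "Rel L1 L3"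
  unfolding Rel_def
proof (intro allI impI)
  fix lam mu assume s: "skew_shape lam mu"
  obtain f where f: "bij_betw f (Ltab L1 (cells lam mu)) (Ltab L2 (cells lam mu))" "\<forall>T\<in>Ltab L1 (cells lam mu). cnt (f T) = cnt T"
    using assms(1) s unfolding Rel_def by blast
  obtain g where g: "bij_betw g (Ltab L2 (cells lam mu)) (Ltab L3 (cells lam mu))" "\<forall>T\<in>Ltab L2 (cells lam mu). cnt (g T) = cnt T"
    using assms(2) s unfolding Rel_def by blast
  have "bij_betw (g \<circ> f) (Ltab L1 (cells lam mu)) (Ltab L3 (cells lam mu))" by (rule bij_betw_trans[OF f(1) g(1)])
  moreover have "\<forall>T\<in>Ltab L1 (cells lam mu). cnt ((g \<circ> f) T) = cnt T"
    using f g bij_betw_apply[OF f(1)] by simp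
  ultimately show "\<exists>f. bij_betw f (Ltab L1 (cells lam mu)) (Ltab L3 (cells lam mu)) \<and> (\<forall>T\<in>Ltab L1 (cells lam mu). cnt (f T) = cnt T)"
    by blast
qed

lemma Rel_swap: assumes d: "distinct (xs@a#b#ys)" shows "Rel (xs@a#b#ys) (xs@b#a#ys)"
  unfolding Rel_def
proof (intro allI impI)
  fix lam mu assume s: "skew_shape lam mu"
  show "\<exists>f. bij_betw f (Ltab (xs@a#b#ys) (cells lam mu)) (Ltab (xs@b#a#ys) (cells lam mu)) \<and>
      (\<forall>T\<in>Ltab (xs@a#b#ys) (cells lam mu). cnt (f T) = cnt T)"
  proof (cases "snd a \<and> snd b")
    case False
    show ?thesis using swap_tab[OF skew_sh[OF s d] False] unfolding cells_eq .
  next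
    case True
    define L where "L = xs@a#b#ys"
    define L' where "L' = xs@b#a#ys"
    define C where "C = cells lam mu"
    have s': "skew_shape (conj lam) (conj mu)" by (rule conj_skew[OF s])
    have "inj_on flip (set (xs@a#b#ys))" by (simp add: inj_on_def)
    then have "distinct (map flip (xs@a#b#ys))" using d by (simp only: distinct_map)
    then have dF: "distinct (map flip xs @ flip a # flip b # map flip ys)" by simp
    have nm: "\<not> (snd (flip a) \<and> snd (flip b))" using True by simp
    obtain g where g: "bij_betw g (Ltab (map flip L) (prod.swap ` C)) (Ltab (map flip L') (prod.swap ` C))"
      "\<forall>T\<in>Ltab (map flip L) (prod.swap ` C). cnt (g T) = cnt T"
      using swap_tab[OF skew_sh[OF s' dF] nm] unfolding cells_eq[symmetric] conj_cells[OF s]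
      unfolding L_def L'_def C_def by auto
    have b1: "bij_betw tr (Ltab L C) (Ltab (map flip L) (prod.swap ` C))" by (rule tr_bij)
    have b2: "bij_betw tr (Ltab (map flip L') (prod.swap ` C)) (Ltab L' C)"
      using tr_bij[of "map flip L'" "prod.swap ` C"] by (simp add: comp_def)
    have "bij_betw (tr \<circ> (g \<circ> tr)) (Ltab L C) (Ltab L' C)"
      by (rule bij_betw_trans[OF bij_betw_trans[OF b1 g(1)] b2])
    moreover have "cnt ((tr \<circ> (g \<circ> tr)) T) = cnt T" if T: "T \<in> Ltab L C" for T
    proof
      fix c
      have "tr T \<in> Ltab (map flip L) (prod.swap ` C)" using bij_betw_apply[OF b1 T] .
      then have "cnt (g (tr T)) = cnt (tr T)" using g(2) by blast
      then show "cnt ((tr \<circ> (g \<circ> tr)) T) c = cnt T c" by (simp add: cnt_tr)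
    qed
    ultimately show ?thesis unfolding L_def L'_def C_def by blast
  qed
qed

section \<open>Reachability by adjacent swaps\<close>

definition sw :: "letter list \<Rightarrow> letter list \<Rightarrow> bool" where
  "sw L L' \<longleftrightarrow> (\<exists>xs a b ys. L = xs@a#b#ys \<and> L' = xs@b#a#ys)"

lemma sw_cons: "sw L L' \<Longrightarrow> sw (x#L) (x#L')"
  unfolding sw_def by (metis append_Cons)

lemma swr_cons: "sw\<^sup>*\<^sup>* L L' \<Longrightarrow> sw\<^sup>*\<^sup>* (x#L) (x#L')"
  by (induction rule: rtranclp_induct) (auto intro: rtranclp.rtrancl_into_rtrancl sw_cons)

lemma swr_move: "sw\<^sup>*\<^sup>* (x#ys@zs) (ys@x#zs)"
proof (induction ys)
  case Nil then show ?case by simp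
next
  case (Cons y ys)
  have "sw (x#y#ys@zs) (y#x#ys@zs)" unfolding sw_def by (intro exI[of _ "[]"]) auto
  moreover have "sw\<^sup>*\<^sup>* (y#x#ys@zs) (y#ys@x#zs)" using swr_cons[OF Cons.IH] .
  ultimately show ?case by (simp add: converse_rtranclp_into_rtranclp)
qed

lemma reach: "distinct L1 \<Longrightarrow> distinct L2 \<Longrightarrow> set L1 = set L2 \<Longrightarrow> sw\<^sup>*\<^sup>* L1 L2"
proof (induction L1 arbitrary: L2)
  case Nil then show ?case by simp
next
  case (Cons x xs)
  have "x \<in> set L2" using Cons.prems by auto
  then obtain ys zs where L2: "L2 = ys@x#zs" by (meson split_list)
  have "distinct (ys@zs)" "set xs = set (ys@zs)" using Cons.prems L2 by auto
  then have "sw\<^sup>*\<^sup>* xs (ys@zs)" using Cons.IH Cons.prems by simp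
  then have "sw\<^sup>*\<^sup>* (x#xs) (x#ys@zs)" by (rule swr_cons)
  then show ?case using swr_move L2 by (metis rtranclp_trans)
qed

lemma sw_distinct: "sw L L' \<Longrightarrow> distinct L \<Longrightarrow> distinct L'"
  unfolding sw_def by auto

lemma swr_Rel: "sw\<^sup>*\<^sup>* L L' \<Longrightarrow> distinct L \<Longrightarrow> Rel L L' \<and> distinct L'"
proof (induction rule: rtranclp_induct)
  case base then show ?case by (simp add: Rel_refl)
next
  case (step y z)
  then have R: "Rel L y" and dy: "distinct y" by auto
  obtain xs a b ys where yz: "y = xs@a#b#ys" "z = xs@b#a#ys" using step.hyps(2) unfolding sw_def by blast
  have "Rel y z" using Rel_swap dy yz by simp
  then show ?case using Rel_trans[OF R] sw_distinct[OF step.hyps(2) dy] by simp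
qed



definition Lp :: "nat \<Rightarrow> letter list" where
  "Lp k = concat (map (\<lambda>v. [(v,True),(v,False)]) [1..<Suc k])"
definition Ls :: "nat \<Rightarrow> letter list" where
  "Ls k = map (\<lambda>v. (v,True)) (rev [1..<Suc k]) @ map (\<lambda>v. (v,False)) [1..<Suc k]"

lemma set_Lp: "set (Lp k) = {a. in_alphabet k a}"
proof (intro set_eqI)
  fix a :: letter
  obtain v m where a: "a = (v,m)" by (cases a)
  show "a \<in> set (Lp k) \<longleftrightarrow> a \<in> {a. in_alphabet k a}"
    unfolding a Lp_def in_alphabet_def by (cases m) auto
qed

lemma set_Ls: "set (Ls k) = {a. in_alphabet k a}"
proof (intro set_eqI)
  fix a :: letter
  obtain v m where a: "a = (v,m)" by (cases a)
  show "a \<in> set (Ls k) \<longleftrightarrow> a \<in> {a. in_alphabet k a}"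
    unfolding a Ls_def in_alphabet_def by (cases m) auto
qed

lemma Lp_Suc: "Lp (Suc k) = Lp k @ [(Suc k,True),(Suc k,False)]"
  unfolding Lp_def by simp

lemma sorted_Lp: "sorted_wrt (\<lambda>x y. rank_primed x < rank_primed y) (Lp k)"
proof (induction k)
  case 0 then show ?case unfolding Lp_def by simp
next
  case (Suc k)
  have bd: "rank_primed x \<le> 2 * int k" if "x \<in> set (Lp k)" for x
    using that unfolding set_Lp in_alphabet_def rank_primed_def by auto
  have b: "\<forall>x\<in>set (Lp k). \<forall>y\<in>set [(Suc k,True),(Suc k,False)]. rank_primed x < rank_primed y"
  proof (intro ballI)
    fix x y assume "x \<in> set (Lp k)" "y \<in> set [(Suc k,True),(Suc k,False)]"
    then show "rank_primed x < rank_primed y" using bd[of x] by (auto simp: rank_primed_def)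
  qed
  have "sorted_wrt (\<lambda>x y. rank_primed x < rank_primed y) [(Suc k,True),(Suc k,False)]"
    by (simp add: rank_primed_def)
  then show ?case using Suc.IH b unfolding Lp_Suc sorted_wrt_append by blast
qed

lemma sorted_Ls: "sorted_wrt (\<lambda>x y. rank_signed x < rank_signed y) (Ls k)"
  unfolding Ls_def sorted_wrt_append sorted_wrt_map sorted_wrt_rev
  by (auto simp del: upt_Suc simp: rank_signed_def intro: sorted_wrt_mono_rel[OF _ sorted_wrt_upt])

lemma sorted_distinct: "sorted_wrt (\<lambda>x y. rk x < (rk y :: int)) L \<Longrightarrow> distinct L"
  by (induction L) auto

lemma sorted_pos:
  assumes s: "sorted_wrt (\<lambda>x y. rk x < (rk y :: int)) L" and a: "a \<in> set L" and b: "b \<in> set L"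
  shows "int (pos L a) \<le> int (pos L b) \<longleftrightarrow> rk a \<le> rk b"
proof -
  have pa: "pos L a < length L" "L ! pos L a = a" using pos_in[OF a] by auto
  have pb: "pos L b < length L" "L ! pos L b = b" using pos_in[OF b] by auto
  show ?thesis
  proof
    assume "int (pos L a) \<le> int (pos L b)"
    then have "pos L a < pos L b \<or> pos L a = pos L b" by auto
    then show "rk a \<le> rk b"
    proof
      assume "pos L a < pos L b"
      then have "rk (L ! pos L a) < rk (L ! pos L b)" using sorted_wrt_nth_less[OF s _ pb(1)] by blast
      then show ?thesis using pa pb by simp
    next
      assume e: "pos L a = pos L b"
      have "a = L ! pos L a" using pa by simp
      also have "\<dots> = L ! pos L b" using e by simp
      also have "\<dots> = b" using pb by simp
      finally show ?thesis by simp
    qed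
  next
    assume h: "rk a \<le> rk b"
    show "int (pos L a) \<le> int (pos L b)"
    proof (rule ccontr)
      assume "\<not> int (pos L a) \<le> int (pos L b)"
      then have "pos L b < pos L a" by simp
      then have "rk (L ! pos L b) < rk (L ! pos L a)" using sorted_wrt_nth_less[OF s _ pa(1)] by blast
      then show False using pa pb h by simp
    qed
  qed
qed

lemma tabw_cong:
  assumes PQ: "\<And>a. P a \<longleftrightarrow> Q a" and rk: "\<And>a b. P a \<Longrightarrow> P b \<Longrightarrow> (rk a \<le> rk b \<longleftrightarrow> rk' a \<le> rk' b)"
  shows "tabw rk P C T = tabw rk' Q C T"
proof -
  have main: "tabw rk' Q C T" if t: "tabw rk P C T" and PQ: "\<And>a. P a \<longleftrightarrow> Q a"
    and rk: "\<And>a b. P a \<Longrightarrow> P b \<Longrightarrow> (rk a \<le> rk b \<longleftrightarrow> rk' a \<le> rk' b)" for rk rk' :: "letter \<Rightarrow> int" and P Q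
  proof -
    have al: "\<And>c a. T c = Some a \<Longrightarrow> P a" using t unfolding tabw_def by blast
    have r: "\<And>i j j' a b. T (i, j) = Some a \<Longrightarrow> T (i, j') = Some b \<Longrightarrow> j \<le> j' \<Longrightarrow> rk a \<le> rk b"
      using t unfolding tabw_def by blast
    have c: "\<And>i i' j a b. T (i, j) = Some a \<Longrightarrow> T (i', j) = Some b \<Longrightarrow> i \<le> i' \<Longrightarrow> rk a \<le> rk b"
      using t unfolding tabw_def by blast
    have r': "rk' a \<le> rk' b" if "T (i, j) = Some a" "T (i, j') = Some b" "j \<le> j'" for i j j' a b
      using r[OF that] rk[OF al[OF that(1)] al[OF that(2)]] by simp
    have c': "rk' a \<le> rk' b" if "T (i, j) = Some a" "T (i', j) = Some b" "i \<le> i'" for i i' j a b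
      using c[OF that] rk[OF al[OF that(1)] al[OF that(2)]] by simp
    show ?thesis unfolding tabw_def
    proof (intro conjI)
      show "\<forall>c. (T c \<noteq> None) = (c \<in> C)" using t unfolding tabw_def by blast
      show "\<forall>c a. T c = Some a \<longrightarrow> Q a" using al PQ by blast
      show "\<forall>i j j' a b. T (i, j) = Some a \<and> T (i, j') = Some b \<and> j \<le> j' \<longrightarrow> rk' a \<le> rk' b"
        using r' by blast
      show "\<forall>i i' j a b. T (i, j) = Some a \<and> T (i', j) = Some b \<and> i \<le> i' \<longrightarrow> rk' a \<le> rk' b"
        using c' by blast
      show "\<forall>r v. card {j. T (r, j) = Some (v, True)} \<le> 1" using t unfolding tabw_def by blast
      show "\<forall>col v. card {i. T (i, col) = Some (v, False)} \<le> 1" using t unfolding tabw_def by blast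
    qed
  qed
  show ?thesis
  proof
    assume "tabw rk P C T" then show "tabw rk' Q C T" using main PQ rk by blast
  next
    assume "tabw rk' Q C T" then show "tabw rk P C T" using main[where rk=rk' and P=Q and rk'=rk and Q=P] PQ rk by blast
  qed
qed

lemma primed_eq: "primed_tableaux lam mu k = Ltab (Lp k) (cells lam mu)"
  unfolding primed_tableaux_def Ltab_def tableau_wrt_tabw
proof (intro Collect_cong tabw_cong)
  fix a show "in_alphabet k a \<longleftrightarrow> a \<in> set (Lp k)" unfolding set_Lp by simp
next
  fix a b assume "in_alphabet k a" "in_alphabet k b"
  then show "rank_primed a \<le> rank_primed b \<longleftrightarrow> int (pos (Lp k) a) \<le> int (pos (Lp k) b)"
    using sorted_pos[OF sorted_Lp, of a k b] unfolding set_Lp by simp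
qed

lemma signed_eq: "signed_tableaux lam mu k = Ltab (Ls k) (cells lam mu)"
  unfolding signed_tableaux_def Ltab_def tableau_wrt_tabw
proof (intro Collect_cong tabw_cong)
  fix a show "in_alphabet k a \<longleftrightarrow> a \<in> set (Ls k)" unfolding set_Ls by simp
next
  fix a b assume "in_alphabet k a" "in_alphabet k b"
  then show "rank_signed a \<le> rank_signed b \<longleftrightarrow> int (pos (Ls k) a) \<le> int (pos (Ls k) b)"
    using sorted_pos[OF sorted_Ls, of a k b] unfolding set_Ls by simp
qed

theorem corollary4p2:
  fixes lam mu :: "nat list" and k :: nat
  assumes "skew_shape lam mu"
  shows "\<exists>f. bij_betw f (primed_tableaux lam mu k) (signed_tableaux lam mu k) \<and>
             (\<forall>T \<in> primed_tableaux lam mu k. double_weight (f T) = double_weight T)"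
proof -
  have d1: "distinct (Lp k)" by (rule sorted_distinct[OF sorted_Lp])
  have d2: "distinct (Ls k)" by (rule sorted_distinct[OF sorted_Ls])
  have "sw\<^sup>*\<^sup>* (Lp k) (Ls k)" using reach[OF d1 d2] set_Lp set_Ls by simp
  then have "Rel (Lp k) (Ls k)" using swr_Rel d1 by blast
  then obtain f where f: "bij_betw f (Ltab (Lp k) (cells lam mu)) (Ltab (Ls k) (cells lam mu))"
    "\<forall>T\<in>Ltab (Lp k) (cells lam mu). cnt (f T) = cnt T"
    using assms unfolding Rel_def by blast
  have "double_weight (f T) = double_weight T" if "T \<in> primed_tableaux lam mu k" for T
  proof -
    have "cnt (f T) = cnt T" using f(2) that primed_eq by blast
    then show ?thesis unfolding double_weight_def cnt_def by (simp add: fun_eq_iff)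
  qed
  then show ?thesis using f(1) unfolding primed_eq signed_eq by blast
qed


end
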